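(* Let $\dot{\mathcal H}$ and $\dot H$ be as described in the context. There exists a generic set $\mathcal R\subset\dot{\mathcal H}$ such that for each $|\psi\rangle\in\mathcal R$, each orthonormal basis $\mathfrak B=\{|k\rangle\}_{k\in\mathbb N}$ of $\dot{\mathcal H}$ and each $p>0$, \[\beta^+_{|\psi\rangle}(p,\mathfrak B)\ge\tfrac13 .\] In particular, for every $|\psi\rangle\in\mathcal R$ and every orthonormal basis $\mathfrak B$ of $\dot{\mathcal H}$, there is $p>0$ with $\beta^+_{|\psi\rangle}(p,\mathfrak B)>0$ (weak dynamical delocalization).
   Context: The Hydrogen atom Hamiltonian is $H=-\Delta-\kappa/|x|$ acting in $\mathrm{L}^2(\mathbb R^3)$, $\kappa>0$. Its eigenvalues are $\lambda_n=-\Lambda/n^2$, $n=1,2,\dots$, with $\Lambda=\kappa^2/4$, each of multiplicity $n^2$, with orthonormal eigenfunctions $|n,l,m\rangle$. $\dot{\mathcal H}$ denotes the closed subspace spanned by all these eigenfunctions, and $\dot H$ the restriction of $H$ to $\dot{\mathcal H}$ (a bounded self-adjoint operator). For $|\psi\rangle\in\dot{\mathcal H}$ let $|\psi(s)\rangle=e^{-is\dot H}|\psi\rangle$. For an orthonormal basis $\mathfrak B=\{|k\rangle\}_{k\in\mathbb N}$ of $\dot{\mathcal H}$, $t>0$ and $p>0$, define $W_{|k\rangle,|\psi\rangle}(t)=\frac1t\int_0^t|\langle k|\psi(s)\rangle|^2\,ds$, the $p$-moment $r^{|\psi\rangle}_{p,\mathfrak B}(t)=\big(\sum_k k^p\,W_{|k\rangle,|\psi\rangle}(t)\big)^{1/p}$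 (possibly $+\infty$), and the upper moment growth exponent $\beta^+_{|\psi\rangle}(p,\mathfrak B)=\limsup_{t\to\infty}\frac{\ln r^{|\psi\rangle}_{p,\mathfrak B}(t)}{\ln t}$ (possibly $+\infty$). A generic set in a complete metric space is a countable intersection of open dense sets. *)

theory Defs
  imports "HOL-Analysis.Analysis"
begin

text \<open>Model of the point-spectral subspace of the Hydrogen Hamiltonian:
  it is identified (unitarily) with the complex l2 space over the labels
  (n,l,m) with n >= 1, 0 <= l < n, |m| <= l, the label (n,l,m) corresponding
  to the eigenfunction |n,l,m>.  The restricted Hamiltonian acts diagonally
  with eigenvalue -Lambda/n^2, Lambda = kappa^2/4.\<close>

type_synonym hlabel = "nat \<times> nat \<times> int"
type_synonym hvec = "hlabel \<Rightarrow> complex"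

definition hyd_labels :: "hlabel set" where
  "hyd_labels = {(n, l, m). 1 \<le> n \<and> l < n \<and> \<bar>m\<bar> \<le> int l}"

definition hyd_space :: "hvec set" where
  "hyd_space = {\<psi>. (\<forall>i. i \<notin> hyd_labels \<longrightarrow> \<psi> i = 0) \<and>
                   (\<lambda>i. (cmod (\<psi> i))\<^sup>2) summable_on UNIV}"

definition hinner :: "hvec \<Rightarrow> hvec \<Rightarrow> complex" where
  "hinner \<phi> \<psi> = infsum (\<lambda>i. cnj (\<phi> i) * \<psi> i) UNIV"

definition hnorm :: "hvec \<Rightarrow> real" where
  "hnorm \<psi> = sqrt (infsum (\<lambda>i. (cmod (\<psi> i))\<^sup>2) UNIV)"

definition hdist :: "hvec \<Rightarrow> hvec \<Rightarrow> real" where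
  "hdist \<phi> \<psi> = hnorm (\<lambda>i. \<phi> i - \<psi> i)"

definition hyd_eigval :: "real \<Rightarrow> nat \<Rightarrow> real" where
  "hyd_eigval \<kappa> n = - (\<kappa>\<^sup>2 / 4) / (real n)\<^sup>2"

definition hyd_evol :: "real \<Rightarrow> real \<Rightarrow> hvec \<Rightarrow> hvec" where
  "hyd_evol \<kappa> s \<psi> = (\<lambda>(n, l, m). exp (- \<i> * complex_of_real (s * hyd_eigval \<kappa> n)) * \<psi> (n, l, m))"

text \<open>Orthonormal basis indexed by N = {1,2,...} (values at index 0 are irrelevant).\<close>
definition hyd_onb :: "(nat \<Rightarrow> hvec) \<Rightarrow> bool" where
  "hyd_onb B \<longleftrightarrow>
     (\<forall>k\<ge>1. B k \<in> hyd_space) \<and>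
     (\<forall>j\<ge>1. \<forall>k\<ge>1. hinner (B j) (B k) = (if j = k then 1 else 0)) \<and>
     (\<forall>\<psi>\<in>hyd_space. (\<forall>k\<ge>1. hinner (B k) \<psi> = 0) \<longrightarrow> \<psi> = (\<lambda>_. 0))"

definition hyd_W :: "real \<Rightarrow> hvec \<Rightarrow> hvec \<Rightarrow> real \<Rightarrow> real" where
  "hyd_W \<kappa> b \<psi> t = (1 / t) * integral {0..t} (\<lambda>s. (cmod (hinner b (hyd_evol \<kappa> s \<psi>)))\<^sup>2)"

definition hyd_moment_sum :: "real \<Rightarrow> real \<Rightarrow> (nat \<Rightarrow> hvec) \<Rightarrow> hvec \<Rightarrow> real \<Rightarrow> ereal" where
  "hyd_moment_sum \<kappa> p B \<psi> t =
     (\<Sum>k. if k = 0 then 0 else ereal (real k powr p * hyd_W \<kappa> (B k) \<psi> t))"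

definition hyd_moment :: "real \<Rightarrow> real \<Rightarrow> (nat \<Rightarrow> hvec) \<Rightarrow> hvec \<Rightarrow> real \<Rightarrow> ereal" where
  "hyd_moment \<kappa> p B \<psi> t =
     (let S = hyd_moment_sum \<kappa> p B \<psi> t in
      if S = \<infinity> then \<infinity> else ereal (real_of_ereal S powr (1 / p)))"

definition hyd_beta_plus :: "real \<Rightarrow> hvec \<Rightarrow> real \<Rightarrow> (nat \<Rightarrow> hvec) \<Rightarrow> ereal" where
  "hyd_beta_plus \<kappa> \<psi> p B =
     Limsup at_top (\<lambda>t::real. let r = hyd_moment \<kappa> p B \<psi> t in
        if r = \<infinity> then \<infinity> else ereal (ln (real_of_ereal r) / ln t))"

definition hyd_open :: "hvec set \<Rightarrow> bool" where
  "hyd_open U \<longleftrightarrow> U \<subseteq> hyd_space \<and>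
     (\<forall>x\<in>U. \<exists>e>0. \<forall>y\<in>hyd_space. hdist y x < e \<longrightarrow> y \<in> U)"

definition hyd_dense :: "hvec set \<Rightarrow> bool" where
  "hyd_dense U \<longleftrightarrow> (\<forall>x\<in>hyd_space. \<forall>e>0. \<exists>y\<in>U. hdist y x < e)"

definition hyd_generic :: "hvec set \<Rightarrow> bool" where
  "hyd_generic R \<longleftrightarrow>
     (\<exists>F :: nat \<Rightarrow> hvec set. (\<forall>j. hyd_open (F j) \<and> hyd_dense (F j)) \<and> R = (\<Inter>j. F j))"

end

theory Submission
  imports Defs "HOL-Real_Asymp.Real_Asymp"
begin

lemma sq_sum_le: fixes a b :: real shows "(a+b)^2 \<le> 2*a^2 + 2*b^2"
proof -
  have "0 \<le> (a-b)^2" by simp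
  thus ?thesis by (simp add: power2_eq_square algebra_simps)
qed

lemma prod_le_sq: fixes a b :: real shows "a*b \<le> a^2 + b^2"
proof -
  have "0 \<le> (a-b)^2" "0 \<le> a*a" "0\<le> b*b" by simp_all
  hence "2*(a*b) \<le> a*a + b*b" by (simp add: power2_eq_square algebra_simps)
  thus ?thesis using \<open>0 \<le> a*a\<close> \<open>0\<le> b*b\<close> unfolding power2_eq_square by linarith
qed

lemma hs_summable: "x \<in> hyd_space \<Longrightarrow> (\<lambda>i. (cmod (x i))\<^sup>2) summable_on UNIV"
  by (simp add: hyd_space_def)

lemma hs_supp: "x \<in> hyd_space \<Longrightarrow> i \<notin> hyd_labels \<Longrightarrow> x i = 0"
  unfolding hyd_space_def mem_Collect_eq by blast

lemma hs_add: assumes "x \<in> hyd_space" "y \<in> hyd_space" shows "(\<lambda>i. x i + y i) \<in> hyd_space"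
proof -
  have "(\<lambda>i. 2 * (cmod (x i))\<^sup>2 + 2 * (cmod (y i))\<^sup>2) summable_on UNIV"
    using hs_summable[OF assms(1)] hs_summable[OF assms(2)]
    by (intro summable_on_add summable_on_cmult_right) auto
  moreover have "(cmod (x i + y i))\<^sup>2 \<le> 2 * (cmod (x i))\<^sup>2 + 2 * (cmod (y i))\<^sup>2" for i
  proof -
    have "cmod (x i + y i) \<le> cmod (x i) + cmod (y i)" by (rule norm_triangle_ineq)
    hence "(cmod (x i + y i))\<^sup>2 \<le> (cmod (x i) + cmod (y i))\<^sup>2"
      by (simp add: power_mono)
    also have "\<dots> \<le> 2 * (cmod (x i))\<^sup>2 + 2 * (cmod (y i))\<^sup>2"
      by (rule sq_sum_le)
    finally show ?thesis .
  qed
  ultimately have "(\<lambda>i. (cmod (x i + y i))\<^sup>2) summable_on UNIV"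
    by (rule summable_on_comparison_test) auto
  thus ?thesis using assms by (auto simp: hyd_space_def)
qed

lemma hs_scale: assumes "x \<in> hyd_space" shows "(\<lambda>i. c * x i) \<in> hyd_space"
proof -
  have "(\<lambda>i. (cmod c)\<^sup>2 * (cmod (x i))\<^sup>2) summable_on UNIV"
    using hs_summable[OF assms] by (intro summable_on_cmult_right)
  hence "(\<lambda>i. (cmod (c * x i))\<^sup>2) summable_on UNIV"
    by (simp add: norm_mult power_mult_distrib)
  thus ?thesis using assms by (auto simp: hyd_space_def)
qed

lemma hs_uminus: assumes "x \<in> hyd_space" shows "(\<lambda>i. - x i) \<in> hyd_space"
  using hs_scale[OF assms, of "-1"] by simp

lemma hs_diff: assumes "x \<in> hyd_space" "y \<in> hyd_space" shows "(\<lambda>i. x i - y i) \<in> hyd_space"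
  using hs_add[OF assms(1) hs_uminus[OF assms(2)]] by simp

lemma hs_zero: "(\<lambda>i. 0) \<in> hyd_space"
  by (simp add: hyd_space_def)

lemma hs_sum: assumes "\<And>k. k \<in> K \<Longrightarrow> f k \<in> hyd_space" shows "(\<lambda>i. \<Sum>k\<in>K. f k i) \<in> hyd_space"
  using assms
proof (induction K rule: infinite_finite_induct)
  case (infinite A) then show ?case by (simp add: hs_zero)
next
  case empty then show ?case by (simp add: hs_zero)
next
  case (insert x F)
  then show ?case by (simp add: hs_add)
qed

lemma prod_summable:
  assumes "x \<in> hyd_space" "y \<in> hyd_space"
  shows "(\<lambda>i. norm (cnj (x i) * y i)) summable_on UNIV"
proof -
  have "(\<lambda>i. (cmod (x i))\<^sup>2 + (cmod (y i))\<^sup>2) summable_on UNIV"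
    using hs_summable[OF assms(1)] hs_summable[OF assms(2)] by (intro summable_on_add)
  moreover have "norm (cnj (x i) * y i) \<le> (cmod (x i))\<^sup>2 + (cmod (y i))\<^sup>2" for i
    by (simp add: norm_mult prod_le_sq)
  ultimately show ?thesis
    by (rule summable_on_comparison_test) auto
qed

lemma prod_summable': "x \<in> hyd_space \<Longrightarrow> y \<in> hyd_space \<Longrightarrow> (\<lambda>i. cnj (x i) * y i) summable_on UNIV"
  by (rule abs_summable_summable, rule prod_summable)

lemma hnorm_sq: "x \<in> hyd_space \<Longrightarrow> (hnorm x)\<^sup>2 = infsum (\<lambda>i. (cmod (x i))\<^sup>2) UNIV"
proof -
  have "0 \<le> infsum (\<lambda>i. (cmod (x i))\<^sup>2) UNIV" by (rule infsum_nonneg) simp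
  thus ?thesis unfolding hnorm_def by simp
qed

lemma hnorm_nonneg: "hnorm x \<ge> 0"
proof -
  have "0 \<le> infsum (\<lambda>i. (cmod (x i))\<^sup>2) UNIV" by (rule infsum_nonneg) simp
  thus ?thesis unfolding hnorm_def by simp
qed

lemma hinner_self: assumes "x \<in> hyd_space" shows "hinner x x = complex_of_real ((hnorm x)\<^sup>2)"
proof -
  have "hinner x x = infsum (\<lambda>i. complex_of_real ((cmod (x i))\<^sup>2)) UNIV"
    unfolding hinner_def by (intro infsum_cong) (metis complex_norm_square mult.commute of_real_power)
  also have "\<dots> = complex_of_real (infsum (\<lambda>i. (cmod (x i))\<^sup>2) UNIV)"
    by (rule infsumI, rule has_sum_of_real, rule has_sum_infsum, rule hs_summable[OF assms])
  finally show ?thesis using hnorm_sq[OF assms] by simp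
qed

lemma hinner_add_right: "x \<in> hyd_space \<Longrightarrow> y \<in> hyd_space \<Longrightarrow> z \<in> hyd_space \<Longrightarrow>
   hinner x (\<lambda>i. y i + z i) = hinner x y + hinner x z"
  unfolding hinner_def by (simp add: distrib_left infsum_add prod_summable')

lemma hinner_scale_right: "hinner x (\<lambda>i. c * y i) = c * hinner x y"
  unfolding hinner_def by (simp add: infsum_cmult_right' mult.left_commute)

lemma hinner_scale_left: "hinner (\<lambda>i. c * x i) y = cnj c * hinner x y"
  unfolding hinner_def by (simp add: infsum_cmult_right' mult.assoc)

lemma hinner_cnj: "hinner y x = cnj (hinner x y)"
  unfolding hinner_def by (simp add: mult.commute flip: infsum_cnj)

lemma hinner_add_left: "x \<in> hyd_space \<Longrightarrow> y \<in> hyd_space \<Longrightarrow> z \<in> hyd_space \<Longrightarrow>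
   hinner (\<lambda>i. y i + z i) x = hinner y x + hinner z x"
proof -
  assume a: "x \<in> hyd_space" "y \<in> hyd_space" "z \<in> hyd_space"
  have "hinner (\<lambda>i. y i + z i) x = cnj (hinner x (\<lambda>i. y i + z i))" by (rule hinner_cnj)
  also have "\<dots> = cnj (hinner x y) + cnj (hinner x z)" using hinner_add_right[OF a] by simp
  finally show ?thesis by (simp only: hinner_cnj[of y x, symmetric] hinner_cnj[of z x, symmetric])
qed

lemma hinner_diff_right: "x \<in> hyd_space \<Longrightarrow> y \<in> hyd_space \<Longrightarrow> z \<in> hyd_space \<Longrightarrow>
   hinner x (\<lambda>i. y i - z i) = hinner x y - hinner x z"
  using hinner_add_right[OF _ _ hs_uminus, of x y z] hinner_scale_right[of x "-1" z] by simp

lemma hinner_diff_left: "x \<in> hyd_space \<Longrightarrow> y \<in> hyd_space \<Longrightarrow> z \<in> hyd_space \<Longrightarrow>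
   hinner (\<lambda>i. y i - z i) x = hinner y x - hinner z x"
proof -
  assume a: "x \<in> hyd_space" "y \<in> hyd_space" "z \<in> hyd_space"
  have "hinner (\<lambda>i. y i - z i) x = cnj (hinner x (\<lambda>i. y i - z i))" by (rule hinner_cnj)
  also have "\<dots> = cnj (hinner x y) - cnj (hinner x z)" using hinner_diff_right[OF a] by simp
  finally show ?thesis by (simp only: hinner_cnj[of y x, symmetric] hinner_cnj[of z x, symmetric])
qed

lemma hinner_sum_right: assumes "x \<in> hyd_space" "\<And>k. k \<in> K \<Longrightarrow> f k \<in> hyd_space"
  shows "hinner x (\<lambda>i. \<Sum>k\<in>K. f k i) = (\<Sum>k\<in>K. hinner x (f k))"
  using assms(2)
proof (induction K rule: infinite_finite_induct)
  case (infinite A) then show ?case by (simp add: hinner_def)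
next
  case empty then show ?case by (simp add: hinner_def)
next
  case (insert a F)
  have "hinner x (\<lambda>i. \<Sum>k\<in>insert a F. f k i) = hinner x (\<lambda>i. f a i + (\<Sum>k\<in>F. f k i))"
    using insert by simp
  also have "\<dots> = hinner x (f a) + hinner x (\<lambda>i. \<Sum>k\<in>F. f k i)"
    using insert assms(1) by (intro hinner_add_right hs_sum) auto
  finally show ?case using insert by simp
qed

lemma hinner_sum_left: assumes "x \<in> hyd_space" "\<And>k. k \<in> K \<Longrightarrow> f k \<in> hyd_space"
  shows "hinner (\<lambda>i. \<Sum>k\<in>K. f k i) x = (\<Sum>k\<in>K. hinner (f k) x)"
proof -
  have "hinner (\<lambda>i. \<Sum>k\<in>K. f k i) x = cnj (hinner x (\<lambda>i. \<Sum>k\<in>K. f k i))" by (rule hinner_cnj)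
  also have "\<dots> = (\<Sum>k\<in>K. cnj (hinner x (f k)))" using hinner_sum_right[of x K f] assms by simp
  also have "\<dots> = (\<Sum>k\<in>K. hinner (f k) x)" by (intro sum.cong refl) (rule hinner_cnj[symmetric])
  finally show ?thesis .
qed

lemma am_gm_bound:
  fixes S X Y :: real
  assumes h: "\<And>c. c > 0 \<Longrightarrow> S \<le> (c*X + Y/c)/2" and X: "X \<ge> 0" and Y: "Y \<ge> 0"
  shows "S \<le> sqrt X * sqrt Y"
proof (cases "X > 0 \<and> Y > 0")
  case True
  define c where "c = sqrt Y / sqrt X"
  have c: "c > 0" using True by (simp add: c_def)
  have sX: "sqrt X * sqrt X = X" and sY: "sqrt Y * sqrt Y = Y" using X Y by simp_all
  have nX: "sqrt X \<noteq> 0" and nY: "sqrt Y \<noteq> 0" using True by simp_all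
  have "c * X = sqrt X * sqrt Y" unfolding c_def
    by (subst (2) sX[symmetric]) (use nX in \<open>simp add: field_simps\<close>)
  moreover have "Y / c = sqrt X * sqrt Y" unfolding c_def
    by (subst sY[symmetric]) (use nX nY in \<open>simp add: field_simps\<close>)
  ultimately show ?thesis using h[OF c] by simp
next
  case False
  show ?thesis
  proof (rule ccontr)
    assume "\<not> ?thesis"
    hence S: "S > 0" using False X Y by auto
    show False
    proof (cases "X = 0")
      case True
      define c where "c = (Y+1)/S"
      have c: "c > 0" using S Y by (simp add: c_def)
      have "S \<le> Y / c / 2" using h[OF c] True by simp
      also have "\<dots> = Y * S / (Y+1) / 2" using S Y by (simp add: c_def)
      also have "\<dots> < S"
      proof -
        have "Y * S / (Y+1) \<le> S" using S Y by (simp add: field_simps)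
        hence "Y * S / (Y+1) / 2 \<le> S / 2" by (intro divide_right_mono) simp_all
        thus ?thesis using S by linarith
      qed
      finally show False by simp
    next
      case False
      hence "Y = 0" using \<open>\<not> (X > 0 \<and> Y > 0)\<close> X Y by auto
      define c where "c = S/(X+1)"
      have c: "c > 0" using S X by (simp add: c_def)
      have "S \<le> c * X / 2" using h[OF c] \<open>Y = 0\<close> by simp
      also have "\<dots> = S * X / (X+1) / 2" by (simp add: c_def)
      also have "\<dots> < S"
      proof -
        have "S * X / (X+1) \<le> S" using S X by (simp add: field_simps)
        hence "S * X / (X+1) / 2 \<le> S / 2" by (intro divide_right_mono) simp_all
        thus ?thesis using S by linarith
      qed
      finally show False by simp
    qed
  qed
qed

lemma hnorm_sq_Re: "x \<in> hyd_space \<Longrightarrow> (hnorm x)\<^sup>2 = Re (hinner x x)"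
  by (simp add: hinner_self)

lemma hinner_CS: assumes "x \<in> hyd_space" "y \<in> hyd_space"
  shows "cmod (hinner x y) \<le> hnorm x * hnorm y"
proof -
  define S where "S = infsum (\<lambda>i. norm (cnj (x i) * y i)) UNIV"
  define X where "X = infsum (\<lambda>i. (cmod (x i))\<^sup>2) UNIV"
  define Y where "Y = infsum (\<lambda>i. (cmod (y i))\<^sup>2) UNIV"
  have "cmod (hinner x y) \<le> S" unfolding hinner_def S_def
    by (rule norm_infsum_bound, rule prod_summable[OF assms])
  also have "S \<le> sqrt X * sqrt Y"
  proof (rule am_gm_bound)
    fix c :: real assume c: "c > 0"
    have pw: "norm (cnj (x i) * y i) \<le> (c * (cmod (x i))\<^sup>2 + (cmod (y i))\<^sup>2 / c) / 2" for i
    proof -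
      have "0 \<le> (c * cmod (x i) - cmod (y i))\<^sup>2" by simp
      hence "2 * c * (cmod (x i) * cmod (y i)) \<le> c*c*(cmod (x i))\<^sup>2 + (cmod (y i))\<^sup>2"
        by (simp add: power2_eq_square algebra_simps)
      hence "2 * (cmod (x i) * cmod (y i)) \<le> (c*c*(cmod (x i))\<^sup>2 + (cmod (y i))\<^sup>2) / c"
        using c by (simp add: field_simps)
      also have "\<dots> = c * (cmod (x i))\<^sup>2 + (cmod (y i))\<^sup>2 / c"
        using c by (simp add: field_simps power2_eq_square)
      finally show ?thesis by (simp add: norm_mult)
    qed
    have s1: "(\<lambda>i. c * (cmod (x i))\<^sup>2) summable_on UNIV"
      by (rule summable_on_cmult_right, rule hs_summable[OF assms(1)])
    have s2: "(\<lambda>i. (cmod (y i))\<^sup>2 / c) summable_on UNIV"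
      using summable_on_cmult_left[OF hs_summable[OF assms(2)], of "1/c"] by simp
    have s3: "(\<lambda>i. (c * (cmod (x i))\<^sup>2 + (cmod (y i))\<^sup>2 / c) / 2) summable_on UNIV"
      using summable_on_cmult_left[OF summable_on_add[OF s1 s2], of "1/2"] by simp
    have "S \<le> infsum (\<lambda>i. (c * (cmod (x i))\<^sup>2 + (cmod (y i))\<^sup>2 / c) / 2) UNIV"
      unfolding S_def
      by (rule infsum_mono[OF prod_summable[OF assms] s3 pw])
    also have "\<dots> = (c * X + Y / c) / 2"
    proof -
      have "infsum (\<lambda>i. (c * (cmod (x i))\<^sup>2 + (cmod (y i))\<^sup>2 / c) / 2) UNIV
          = infsum (\<lambda>i. c * (cmod (x i))\<^sup>2 + (cmod (y i))\<^sup>2 / c) UNIV / 2"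
        unfolding divide_inverse[of _ 2] by (rule infsum_cmult_left')
      also have "\<dots> = (infsum (\<lambda>i. c * (cmod (x i))\<^sup>2) UNIV + infsum (\<lambda>i. (cmod (y i))\<^sup>2 / c) UNIV) / 2"
        by (simp add: infsum_add[OF s1 s2])
      also have "\<dots> = (c * X + Y / c) / 2"
        unfolding X_def Y_def divide_inverse by (simp add: infsum_cmult_right' infsum_cmult_left')
      finally show ?thesis .
    qed
    finally show "S \<le> (c * X + Y / c) / 2" .
  next
    show "X \<ge> 0" unfolding X_def by (rule infsum_nonneg) simp
    show "Y \<ge> 0" unfolding Y_def by (rule infsum_nonneg) simp
  qed
  also have "\<dots> = hnorm x * hnorm y" by (simp add: hnorm_def X_def Y_def)
  finally show ?thesis .
qed

lemma hnorm_add_sq: assumes "x \<in> hyd_space" "y \<in> hyd_space"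
  shows "(hnorm (\<lambda>i. x i + y i))\<^sup>2 = (hnorm x)\<^sup>2 + (hnorm y)\<^sup>2 + 2 * Re (hinner x y)"
proof -
  have xy: "(\<lambda>i. x i + y i) \<in> hyd_space" using assms by (rule hs_add)
  have "(hnorm (\<lambda>i. x i + y i))\<^sup>2 = Re (hinner (\<lambda>i. x i + y i) (\<lambda>i. x i + y i))"
    using xy by (rule hnorm_sq_Re)
  also have "\<dots> = Re (hinner x x + hinner x y + (hinner y x + hinner y y))"
    using assms xy by (simp add: hinner_add_left hinner_add_right)
  also have "\<dots> = (hnorm x)\<^sup>2 + (hnorm y)\<^sup>2 + 2 * Re (hinner x y)"
    using assms by (simp add: hnorm_sq_Re hinner_cnj[of y x])
  finally show ?thesis .
qed

lemma hnorm_triangle: assumes "x \<in> hyd_space" "y \<in> hyd_space"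
  shows "hnorm (\<lambda>i. x i + y i) \<le> hnorm x + hnorm y"
proof -
  have "Re (hinner x y) \<le> hnorm x * hnorm y"
    using complex_Re_le_cmod[of "hinner x y"] hinner_CS[OF assms] by linarith
  hence "(hnorm (\<lambda>i. x i + y i))\<^sup>2 \<le> (hnorm x)\<^sup>2 + (hnorm y)\<^sup>2 + 2 * hnorm x * hnorm y"
    using hnorm_add_sq[OF assms] by linarith
  also have "\<dots> = (hnorm x + hnorm y)\<^sup>2" by (rule power2_sum[symmetric])
  finally show ?thesis
    by (rule power2_le_imp_le[OF _ add_nonneg_nonneg[OF hnorm_nonneg hnorm_nonneg]])
qed

lemma hnorm_scale: assumes "x \<in> hyd_space" shows "hnorm (\<lambda>i. c * x i) = cmod c * hnorm x"
proof -
  have "(hnorm (\<lambda>i. c * x i))\<^sup>2 = Re (hinner (\<lambda>i. c * x i) (\<lambda>i. c * x i))"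
    using hs_scale[OF assms] by (rule hnorm_sq_Re)
  also have "\<dots> = Re (cnj c * c * hinner x x)" by (simp only: hinner_scale_left hinner_scale_right mult.assoc)
  also have "\<dots> = Re (complex_of_real ((cmod c)\<^sup>2) * complex_of_real ((hnorm x)\<^sup>2))"
  proof -
    have "cnj c * c = complex_of_real ((cmod c)\<^sup>2)"
      by (simp add: complex_eq_iff cmod_power2) (simp add: power2_eq_square)
    thus ?thesis by (simp add: hinner_self[OF assms])
  qed
  also have "\<dots> = (cmod c * hnorm x)\<^sup>2" by (simp add: power_mult_distrib)
  finally show ?thesis
    by (rule power2_eq_imp_eq[OF _ hnorm_nonneg mult_nonneg_nonneg[OF norm_ge_zero hnorm_nonneg]])
qed

lemma hnorm_uminus: "x \<in> hyd_space \<Longrightarrow> hnorm (\<lambda>i. - x i) = hnorm x"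
  using hnorm_scale[of x "-1"] by simp

lemma hnorm_diff_triangle: assumes "x \<in> hyd_space" "y \<in> hyd_space"
  shows "hnorm (\<lambda>i. x i - y i) \<le> hnorm x + hnorm y"
  using hnorm_triangle[OF assms(1) hs_uminus[OF assms(2)]] hnorm_uminus[OF assms(2)] by simp

lemma hdist_triangle: assumes "x \<in> hyd_space" "y \<in> hyd_space" "z \<in> hyd_space"
  shows "hdist x z \<le> hdist x y + hdist y z"
  unfolding hdist_def using hnorm_triangle[OF hs_diff[OF assms(1,2)] hs_diff[OF assms(2,3)]] by simp

lemma hdist_sym: assumes "x \<in> hyd_space" "y \<in> hyd_space" shows "hdist x y = hdist y x"
  unfolding hdist_def using hnorm_uminus[OF hs_diff[OF assms]] by simp

lemma hnorm_zero: "hnorm (\<lambda>i. 0) = 0" by (simp add: hnorm_def)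

lemma coord_le_hnorm: assumes "x \<in> hyd_space" shows "cmod (x i) \<le> hnorm x"
proof -
  have "sum (\<lambda>i. (cmod (x i))\<^sup>2) {i} \<le> infsum (\<lambda>i. (cmod (x i))\<^sup>2) UNIV"
    by (rule finite_sum_le_infsum[OF hs_summable[OF assms]]) auto
  hence "(cmod (x i))\<^sup>2 \<le> (hnorm x)\<^sup>2" using hnorm_sq[OF assms] by simp
  thus ?thesis by (rule power2_le_imp_le[OF _ hnorm_nonneg])
qed

lemma hnorm_eq_0: assumes "x \<in> hyd_space" "hnorm x = 0" shows "x = (\<lambda>i. 0)"
  using coord_le_hnorm[OF assms(1)] assms(2) by fastforce

lemma hnorm_rev_triangle: assumes "x \<in> hyd_space" "y \<in> hyd_space"
  shows "\<bar>hnorm x - hnorm y\<bar> \<le> hdist x y"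
proof -
  have "hnorm x \<le> hnorm (\<lambda>i. x i - y i) + hnorm y"
    using hnorm_triangle[OF hs_diff[OF assms] assms(2)] by simp
  moreover have "hnorm y \<le> hnorm (\<lambda>i. y i - x i) + hnorm x"
    using hnorm_triangle[OF hs_diff[OF assms(2,1)] assms(1)] by simp
  ultimately show ?thesis using hdist_sym[OF assms] unfolding hdist_def by linarith
qed

definition ortho :: "nat set \<Rightarrow> (nat \<Rightarrow> hvec) \<Rightarrow> bool" where
  "ortho K B \<longleftrightarrow> (\<forall>k\<in>K. B k \<in> hyd_space) \<and>
     (\<forall>j\<in>K. \<forall>k\<in>K. hinner (B j) (B k) = (if j = k then 1 else 0))"

definition combo :: "(nat \<Rightarrow> complex) \<Rightarrow> nat set \<Rightarrow> (nat \<Rightarrow> hvec) \<Rightarrow> hvec" where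
  "combo a K B = (\<lambda>i. \<Sum>k\<in>K. a k * B k i)"

lemma ortho_subset: "ortho K B \<Longrightarrow> K' \<subseteq> K \<Longrightarrow> ortho K' B"
  unfolding ortho_def by blast

lemma onb_ortho: "hyd_onb B \<Longrightarrow> K \<subseteq> {1..} \<Longrightarrow> ortho K B"
  unfolding hyd_onb_def ortho_def by (auto simp: subset_iff)

lemma combo_in: "ortho K B \<Longrightarrow> combo a K B \<in> hyd_space"
  unfolding combo_def ortho_def by (intro hs_sum hs_scale) auto

lemma hinner_combo_right: assumes "ortho K B" "x \<in> hyd_space"
  shows "hinner x (combo a K B) = (\<Sum>k\<in>K. a k * hinner x (B k))"
proof -
  have "hinner x (combo a K B) = (\<Sum>k\<in>K. hinner x (\<lambda>i. a k * B k i))"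
    unfolding combo_def using assms by (intro hinner_sum_right hs_scale) (auto simp: ortho_def)
  thus ?thesis by (simp add: hinner_scale_right)
qed

lemma hinner_combo_left: assumes "ortho K B" "x \<in> hyd_space"
  shows "hinner (combo a K B) x = (\<Sum>k\<in>K. cnj (a k) * hinner (B k) x)"
proof -
  have "hinner (combo a K B) x = (\<Sum>k\<in>K. hinner (\<lambda>i. a k * B k i) x)"
    unfolding combo_def using assms by (intro hinner_sum_left hs_scale) (auto simp: ortho_def)
  thus ?thesis by (simp add: hinner_scale_left)
qed

lemma hinner_basis_combo: assumes "ortho K B" "finite K" "j \<in> K"
  shows "hinner (B j) (combo a K B) = a j"
proof -
  have "hinner (B j) (combo a K B) = (\<Sum>k\<in>K. a k * hinner (B j) (B k))"
    using assms by (intro hinner_combo_right) (auto simp: ortho_def)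
  also have "\<dots> = (\<Sum>k\<in>K. if k = j then a k else 0)"
    using assms by (intro sum.cong refl) (auto simp: ortho_def)
  also have "\<dots> = a j" using assms by simp
  finally show ?thesis .
qed

lemma hnorm_combo_sq: assumes "ortho K B" "finite K"
  shows "(hnorm (combo a K B))\<^sup>2 = (\<Sum>k\<in>K. (cmod (a k))\<^sup>2)"
proof -
  have "(hnorm (combo a K B))\<^sup>2 = Re (hinner (combo a K B) (combo a K B))"
    using combo_in[OF assms(1)] by (rule hnorm_sq_Re)
  also have "\<dots> = Re (\<Sum>k\<in>K. cnj (a k) * hinner (B k) (combo a K B))"
    using assms combo_in[OF assms(1)] by (simp add: hinner_combo_left)
  also have "\<dots> = Re (\<Sum>k\<in>K. cnj (a k) * a k)"
    using assms by (simp add: hinner_basis_combo)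
  also have "\<dots> = (\<Sum>k\<in>K. (cmod (a k))\<^sup>2)"
  proof -
    have "cnj (a k) * a k = complex_of_real ((cmod (a k))\<^sup>2)" for k
      by (simp add: complex_eq_iff cmod_power2) (simp add: power2_eq_square)
    thus ?thesis by simp
  qed
  finally show ?thesis .
qed

lemma bessel_fin: assumes "ortho K B" "finite K" "v \<in> hyd_space"
  shows "(\<Sum>k\<in>K. (cmod (hinner (B k) v))\<^sup>2) \<le> (hnorm v)\<^sup>2"
proof -
  define c where "c k = hinner (B k) v" for k
  define w where "w = combo c K B"
  define r where "r = (\<lambda>i. v i - w i)"
  have w: "w \<in> hyd_space" unfolding w_def using assms(1) by (rule combo_in)
  have r: "r \<in> hyd_space" unfolding r_def using assms(3) w by (rule hs_diff)
  have rB: "hinner (B k) r = 0" if "k \<in> K" for k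
  proof -
    have Bk: "B k \<in> hyd_space" using assms that by (auto simp: ortho_def)
    have "hinner (B k) r = hinner (B k) v - hinner (B k) w"
      unfolding r_def using Bk assms(3) w by (rule hinner_diff_right)
    also have "hinner (B k) w = c k" unfolding w_def using assms that by (intro hinner_basis_combo)
    finally show ?thesis by (simp add: c_def)
  qed
  have "hinner w r = (\<Sum>k\<in>K. cnj (c k) * hinner (B k) r)"
    unfolding w_def using assms r by (intro hinner_combo_left)
  also have "\<dots> = 0" using rB by simp
  finally have wr: "hinner w r = 0" .
  have vw: "v = (\<lambda>i. w i + r i)" unfolding r_def by simp
  have "(hnorm v)\<^sup>2 = (hnorm w)\<^sup>2 + (hnorm r)\<^sup>2 + 2 * Re (hinner w r)"
    using hnorm_add_sq[OF w r] vw by simp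
  also have "\<dots> = (\<Sum>k\<in>K. (cmod (c k))\<^sup>2) + (hnorm r)\<^sup>2"
    using wr hnorm_combo_sq[OF assms(1,2)] by (simp add: w_def)
  finally show ?thesis by (simp add: c_def)
qed

lemma combo_diff: assumes "finite A'" "A \<subseteq> A'"
  shows "(\<lambda>i. combo a A' B i - combo a A B i) = combo a (A' - A) B"
proof
  fix i
  show "combo a A' B i - combo a A B i = combo a (A' - A) B i"
    unfolding combo_def using sum.subset_diff[OF assms(2) assms(1), of "\<lambda>k. a k * B k i"] by simp
qed

lemma onb_norm1: assumes "hyd_onb B" "j \<ge> 1" shows "hnorm (B j) = 1"
proof -
  have Bj: "B j \<in> hyd_space" using assms unfolding hyd_onb_def by auto
  have "hinner (B j) (B j) = 1" using assms unfolding hyd_onb_def by auto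
  hence "complex_of_real ((hnorm (B j))\<^sup>2) = 1" using hinner_self[OF Bj] by simp
  hence "(hnorm (B j))\<^sup>2 = 1" by (metis of_real_eq_1_iff)
  thus ?thesis using hnorm_nonneg[of "B j"] by (simp add: power2_eq_1_iff)
qed

lemma onb_in: "hyd_onb B \<Longrightarrow> j \<ge> 1 \<Longrightarrow> B j \<in> hyd_space"
  unfolding hyd_onb_def by auto

lemma onb_complete: "hyd_onb B \<Longrightarrow> \<psi> \<in> hyd_space \<Longrightarrow> (\<And>k. k \<ge> 1 \<Longrightarrow> hinner (B k) \<psi> = 0) \<Longrightarrow> \<psi> = (\<lambda>_. 0)"
  unfolding hyd_onb_def by blast

lemma sum_sq_le_hnorm_sq:
  assumes "x \<in> hyd_space" "finite F"
  shows "(\<Sum>i\<in>F. (cmod (x i))\<^sup>2) \<le> (hnorm x)\<^sup>2"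
  using finite_sum_le_infsum[OF hs_summable[OF assms(1)] assms(2)] hnorm_sq[OF assms(1)] by simp

lemma parseval:
  assumes onb: "hyd_onb B" and v: "v \<in> hyd_space"
  shows "(\<lambda>K. \<Sum>k\<in>{1..K}. (cmod (hinner (B k) v))\<^sup>2) \<longlonglongrightarrow> (hnorm v)\<^sup>2"
proof -
  define c where "c k = hinner (B k) v" for k
  define P where "P K = (\<Sum>k\<in>{1..K}. (cmod (c k))\<^sup>2)" for K
  define wK where "wK K = combo c {1..K} B" for K
  have orth: "ortho {1..K} B" for K by (rule onb_ortho[OF onb]) auto
  have wK_in: "wK K \<in> hyd_space" for K unfolding wK_def by (rule combo_in[OF orth])
  have P_le: "P K \<le> (hnorm v)\<^sup>2" for K
    unfolding P_def c_def by (rule bessel_fin[OF orth _ v]) simp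
  have P_inc: "incseq P" unfolding P_def
    by (intro incseq_SucI sum_mono2) auto
  obtain l where Pl: "P \<longlonglongrightarrow> l" and Ple: "\<And>K. P K \<le> l"
    using incseq_convergent[OF P_inc, of "(hnorm v)\<^sup>2"] P_le by blast
  have l_le: "l \<le> (hnorm v)\<^sup>2" using LIMSEQ_le_const2[OF Pl] P_le by blast
  have wK_norm: "(hnorm (wK K))\<^sup>2 = P K" for K
    unfolding wK_def P_def by (rule hnorm_combo_sq[OF orth]) simp
  have diff_norm: "(hnorm (\<lambda>i. wK K' i - wK K i))\<^sup>2 = P K' - P K" if "K \<le> K'" for K K'
  proof -
    have sub: "{1..K} \<subseteq> {1..K'}" using that by auto
    have "(\<lambda>i. wK K' i - wK K i) = combo c ({1..K'} - {1..K}) B"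
      unfolding wK_def by (rule combo_diff[OF _ sub]) simp
    hence "(hnorm (\<lambda>i. wK K' i - wK K i))\<^sup>2 = (\<Sum>k\<in>{1..K'} - {1..K}. (cmod (c k))\<^sup>2)"
      using hnorm_combo_sq[OF ortho_subset[OF orth[of K'], of "{1..K'} - {1..K}"]] by simp
    also have "\<dots> = P K' - P K" unfolding P_def
      using sum.subset_diff[OF sub, of "\<lambda>k. (cmod (c k))\<^sup>2"] by simp
    finally show ?thesis .
  qed
  have coord_diff: "cmod (wK K' i - wK K i) \<le> sqrt (P K' - P K)" if "K \<le> K'" for K K' i
  proof -
    have "cmod (wK K' i - wK K i) \<le> hnorm (\<lambda>i. wK K' i - wK K i)"
      using coord_le_hnorm[OF hs_diff[OF wK_in wK_in]] by simp
    also have "\<dots> = sqrt (P K' - P K)"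
      by (rule real_sqrt_unique[symmetric, OF diff_norm[OF that] hnorm_nonneg])
    finally show ?thesis .
  qed
  have cauchy: "Cauchy (\<lambda>K. wK K i)" for i
  proof (rule metric_CauchyI)
    fix e :: real assume e: "e > 0"
    obtain M where M: "\<And>m n. m \<ge> M \<Longrightarrow> n \<ge> M \<Longrightarrow> dist (P m) (P n) < e\<^sup>2"
      using metric_CauchyD[OF LIMSEQ_imp_Cauchy[OF Pl], of "e\<^sup>2"] e by auto
    have "dist (wK m i) (wK n i) < e" if "m \<ge> M" "n \<ge> M" for m n
    proof (cases "m \<le> n")
      case True
      have "dist (wK m i) (wK n i) = cmod (wK n i - wK m i)" by (simp add: dist_norm norm_minus_commute)
      also have "\<dots> \<le> sqrt (P n - P m)" by (rule coord_diff[OF True])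
      also have "\<dots> < sqrt (e\<^sup>2)" using M[OF that] by (intro real_sqrt_less_mono) (simp add: dist_real_def)
      finally show ?thesis using e by simp
    next
      case False
      have "dist (wK m i) (wK n i) = cmod (wK m i - wK n i)" by (simp add: dist_norm)
      also have "\<dots> \<le> sqrt (P m - P n)" using False by (intro coord_diff) simp
      also have "\<dots> < sqrt (e\<^sup>2)" using M[OF that] by (intro real_sqrt_less_mono) (simp add: dist_real_def)
      finally show ?thesis using e by simp
    qed
    thus "\<exists>M. \<forall>m\<ge>M. \<forall>n\<ge>M. dist (wK m i) (wK n i) < e" by blast
  qed
  define w where "w i = lim (\<lambda>K. wK K i)" for i
  have wlim: "(\<lambda>K. wK K i) \<longlonglongrightarrow> w i" for i
    unfolding w_def using cauchy[of i] Cauchy_convergent_iff convergent_LIMSEQ_iff by blast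
  have fin_bound: "(\<Sum>i\<in>F. (cmod (w i - wK K0 i))\<^sup>2) \<le> l - P K0" if "finite F" for F K0
  proof -
    have "(\<lambda>K. \<Sum>i\<in>F. (cmod (wK K i - wK K0 i))\<^sup>2) \<longlonglongrightarrow> (\<Sum>i\<in>F. (cmod (w i - wK K0 i))\<^sup>2)"
      by (intro tendsto_sum tendsto_power tendsto_norm tendsto_diff wlim tendsto_const)
    moreover have "\<forall>K\<ge>K0. (\<Sum>i\<in>F. (cmod (wK K i - wK K0 i))\<^sup>2) \<le> l - P K0"
    proof (intro allI impI)
      fix K assume K: "K \<ge> K0"
      have "(\<Sum>i\<in>F. (cmod (wK K i - wK K0 i))\<^sup>2) \<le> (hnorm (\<lambda>i. wK K i - wK K0 i))\<^sup>2"
        by (rule sum_sq_le_hnorm_sq[OF hs_diff[OF wK_in wK_in] that])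
      also have "\<dots> = P K - P K0" by (rule diff_norm[OF K])
      also have "\<dots> \<le> l - P K0" using Ple[of K] by simp
      finally show "(\<Sum>i\<in>F. (cmod (wK K i - wK K0 i))\<^sup>2) \<le> l - P K0" .
    qed
    ultimately show ?thesis by (intro LIMSEQ_le_const2) auto
  qed
  have fin_bound0: "(\<Sum>i\<in>F. (cmod (w i))\<^sup>2) \<le> l" if "finite F" for F
  proof -
    have "(\<lambda>K. \<Sum>i\<in>F. (cmod (wK K i))\<^sup>2) \<longlonglongrightarrow> (\<Sum>i\<in>F. (cmod (w i))\<^sup>2)"
      by (intro tendsto_sum tendsto_power tendsto_norm wlim)
    moreover have "\<forall>K. (\<Sum>i\<in>F. (cmod (wK K i))\<^sup>2) \<le> l"
    proof
      fix K
      have "(\<Sum>i\<in>F. (cmod (wK K i))\<^sup>2) \<le> (hnorm (wK K))\<^sup>2"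
        by (rule sum_sq_le_hnorm_sq[OF wK_in that])
      thus "(\<Sum>i\<in>F. (cmod (wK K i))\<^sup>2) \<le> l" using wK_norm[of K] Ple[of K] by simp
    qed
    ultimately show ?thesis by (intro LIMSEQ_le_const2) auto
  qed
  have w_summ: "(\<lambda>i. (cmod (w i))\<^sup>2) summable_on UNIV"
  proof (rule nonneg_bdd_above_summable_on)
    show "bdd_above (sum (\<lambda>i. (cmod (w i))\<^sup>2) ` {F. F \<subseteq> UNIV \<and> finite F})"
      by (rule bdd_aboveI[of _ l]) (use fin_bound0 in blast)
  qed simp
  have w_supp: "w i = 0" if "i \<notin> hyd_labels" for i
  proof -
    have "wK K i = 0" for K
      unfolding wK_def combo_def using hs_supp[OF onb_in[OF onb] that] by simp
    hence "(\<lambda>K. wK K i) \<longlonglongrightarrow> 0" by simp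
    thus ?thesis using wlim[of i] LIMSEQ_unique by blast
  qed
  have w_in: "w \<in> hyd_space" unfolding hyd_space_def using w_summ w_supp by auto
  have w_norm: "(hnorm w)\<^sup>2 \<le> l"
    unfolding hnorm_sq[OF w_in] by (rule infsum_le_finite_sums[OF w_summ fin_bound0]) auto
  have d_norm: "(hnorm (\<lambda>i. w i - wK K i))\<^sup>2 \<le> l - P K" for K
  proof -
    have d_in: "(\<lambda>i. w i - wK K i) \<in> hyd_space" by (rule hs_diff[OF w_in wK_in])
    show ?thesis unfolding hnorm_sq[OF d_in]
      by (rule infsum_le_finite_sums[OF hs_summable[OF d_in] fin_bound]) auto
  qed
  have Bw: "hinner (B j) w = c j" if j: "j \<ge> 1" for j
  proof -
    have Bj: "B j \<in> hyd_space" by (rule onb_in[OF onb j])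
    have bnd: "cmod (hinner (B j) w - c j) \<le> sqrt (l - P K)" if K: "K \<ge> j" for K
    proof -
      have jK: "j \<in> {1..K}" using j K by auto
      have "hinner (B j) w - c j = hinner (B j) w - hinner (B j) (wK K)"
        unfolding wK_def using hinner_basis_combo[OF orth _ jK] by simp
      also have "\<dots> = hinner (B j) (\<lambda>i. w i - wK K i)"
        by (rule hinner_diff_right[OF Bj w_in wK_in, symmetric])
      finally have "cmod (hinner (B j) w - c j) \<le> hnorm (B j) * hnorm (\<lambda>i. w i - wK K i)"
        using hinner_CS[OF Bj hs_diff[OF w_in wK_in]] by simp
      also have "\<dots> = hnorm (\<lambda>i. w i - wK K i)" using onb_norm1[OF onb j] by simp
      also have "\<dots> \<le> sqrt (l - P K)" by (rule real_le_rsqrt[OF d_norm])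
      finally show ?thesis .
    qed
    have "(\<lambda>K. sqrt (l - P K)) \<longlonglongrightarrow> sqrt (l - l)"
      by (intro tendsto_real_sqrt tendsto_diff tendsto_const Pl)
    hence "cmod (hinner (B j) w - c j) \<le> 0"
      using bnd by (intro LIMSEQ_le_const) auto
    thus ?thesis by simp
  qed
  have "(\<lambda>i. v i - w i) = (\<lambda>i. 0)"
  proof -
    have "hinner (B k) (\<lambda>i. v i - w i) = 0" if "k \<ge> 1" for k
      using Bw[OF that] hinner_diff_right[OF onb_in[OF onb that] v w_in] by (simp add: c_def)
    thus ?thesis by (rule onb_complete[OF onb hs_diff[OF v w_in]])
  qed
  hence vw: "v = w"
  proof -
    assume h: "(\<lambda>i. v i - w i) = (\<lambda>i. 0)"
    show "v = w"
    proof
      fix i show "v i = w i" using fun_cong[OF h, of i] by simp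
    qed
  qed
  have "l = (hnorm v)\<^sup>2" using l_le w_norm vw by simp
  thus ?thesis using Pl unfolding P_def c_def by simp
qed

definition ph :: "real \<Rightarrow> real \<Rightarrow> nat \<Rightarrow> complex" where
  "ph \<kappa> s n = exp (\<i> * complex_of_real (- (s * hyd_eigval \<kappa> n)))"

lemma evol_eq: "hyd_evol \<kappa> s \<psi> i = ph \<kappa> s (fst i) * \<psi> i"
  by (cases i) (simp add: hyd_evol_def ph_def)

lemma evol_fun: "hyd_evol \<kappa> s \<psi> = (\<lambda>i. ph \<kappa> s (fst i) * \<psi> i)"
  using evol_eq by blast

lemma norm_ph [simp]: "cmod (ph \<kappa> s n) = 1"
  unfolding ph_def by (rule norm_exp_i_times)

lemma expi_diff_le: "cmod (exp (\<i> * complex_of_real a) - exp (\<i> * complex_of_real b)) \<le> \<bar>a - b\<bar>"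
proof -
  have "exp (\<i> * complex_of_real a) = exp (\<i> * complex_of_real b) * exp (\<i> * complex_of_real (a - b))"
    by (subst exp_add[symmetric]) (simp add: algebra_simps)
  hence "exp (\<i> * complex_of_real a) - exp (\<i> * complex_of_real b)
       = exp (\<i> * complex_of_real b) * (exp (\<i> * complex_of_real (a - b)) - 1)"
    by (simp add: algebra_simps)
  hence "cmod (exp (\<i> * complex_of_real a) - exp (\<i> * complex_of_real b))
       = cmod (exp (\<i> * complex_of_real (a - b)) - 1)"
    by (simp add: norm_mult)
  also have "\<dots> = 2 * \<bar>sin ((a - b) / 2)\<bar>" by (rule dist_exp_i_1)
  also have "\<dots> \<le> 2 * \<bar>(a - b) / 2\<bar>" using abs_sin_x_le_abs_x[of "(a - b) / 2"] by linarith
  finally show ?thesis by simp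
qed

lemma eigval_bound: "\<bar>hyd_eigval \<kappa> n\<bar> \<le> \<kappa>\<^sup>2 / 4"
proof (cases "n = 0")
  case True thus ?thesis by (simp add: hyd_eigval_def)
next
  case False
  hence "(real n)\<^sup>2 \<ge> 1" by simp
  hence "\<kappa>\<^sup>2 / 4 / (real n)\<^sup>2 \<le> \<kappa>\<^sup>2 / 4"
    using divide_left_mono[OF \<open>(real n)\<^sup>2 \<ge> 1\<close>, of "\<kappa>\<^sup>2 / 4"] False by fastforce
  thus ?thesis by (simp add: hyd_eigval_def)
qed

lemma ph_lip: "cmod (ph \<kappa> s n - ph \<kappa> s' n) \<le> \<bar>s - s'\<bar> * (\<kappa>\<^sup>2 / 4)"
proof -
  have "cmod (ph \<kappa> s n - ph \<kappa> s' n) \<le> \<bar>- (s * hyd_eigval \<kappa> n) - - (s' * hyd_eigval \<kappa> n)\<bar>"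
    unfolding ph_def by (rule expi_diff_le)
  also have "\<dots> = \<bar>s - s'\<bar> * \<bar>hyd_eigval \<kappa> n\<bar>" by (simp add: abs_mult[symmetric] algebra_simps)
  also have "\<dots> \<le> \<bar>s - s'\<bar> * (\<kappa>\<^sup>2 / 4)" by (intro mult_left_mono eigval_bound) simp
  finally show ?thesis .
qed

lemma evol_in: assumes "\<psi> \<in> hyd_space" shows "hyd_evol \<kappa> s \<psi> \<in> hyd_space"
proof -
  have "(\<lambda>i. (cmod (hyd_evol \<kappa> s \<psi> i))\<^sup>2) = (\<lambda>i. (cmod (\<psi> i))\<^sup>2)"
    by (simp add: evol_eq norm_mult)
  moreover have "hyd_evol \<kappa> s \<psi> i = 0" if "i \<notin> hyd_labels" for i
    using hs_supp[OF assms that] by (simp add: evol_eq)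
  ultimately show ?thesis using hs_summable[OF assms] unfolding hyd_space_def by auto
qed

lemma evol_norm: "hnorm (hyd_evol \<kappa> s \<psi>) = hnorm \<psi>"
proof -
  have "(\<lambda>i. (cmod (hyd_evol \<kappa> s \<psi> i))\<^sup>2) = (\<lambda>i. (cmod (\<psi> i))\<^sup>2)"
    by (simp add: evol_eq norm_mult)
  thus ?thesis unfolding hnorm_def by simp
qed

lemma evol_add: "hyd_evol \<kappa> s (\<lambda>i. x i + y i) = (\<lambda>i. hyd_evol \<kappa> s x i + hyd_evol \<kappa> s y i)"
  by (simp add: evol_fun algebra_simps)

lemma evol_diff: "hyd_evol \<kappa> s (\<lambda>i. x i - y i) = (\<lambda>i. hyd_evol \<kappa> s x i - hyd_evol \<kappa> s y i)"
  by (simp add: evol_fun algebra_simps)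

lemma evol_lip: assumes "\<psi> \<in> hyd_space"
  shows "hnorm (\<lambda>i. hyd_evol \<kappa> s \<psi> i - hyd_evol \<kappa> s' \<psi> i) \<le> \<bar>s - s'\<bar> * (\<kappa>\<^sup>2 / 4) * hnorm \<psi>"
proof -
  define C where "C = \<bar>s - s'\<bar> * (\<kappa>\<^sup>2 / 4)"
  have C: "C \<ge> 0" by (simp add: C_def)
  have d: "(\<lambda>i. hyd_evol \<kappa> s \<psi> i - hyd_evol \<kappa> s' \<psi> i) \<in> hyd_space"
    by (intro hs_diff evol_in assms)
  have pw: "(cmod (hyd_evol \<kappa> s \<psi> i - hyd_evol \<kappa> s' \<psi> i))\<^sup>2 \<le> C\<^sup>2 * (cmod (\<psi> i))\<^sup>2" for i
  proof -
    have "cmod (hyd_evol \<kappa> s \<psi> i - hyd_evol \<kappa> s' \<psi> i) = cmod (ph \<kappa> s (fst i) - ph \<kappa> s' (fst i)) * cmod (\<psi> i)"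
      by (simp add: evol_eq norm_mult[symmetric] algebra_simps)
    also have "\<dots> \<le> C * cmod (\<psi> i)" unfolding C_def by (intro mult_right_mono ph_lip) simp
    finally show ?thesis
      by (metis norm_ge_zero power_mono power_mult_distrib)
  qed
  have "(hnorm (\<lambda>i. hyd_evol \<kappa> s \<psi> i - hyd_evol \<kappa> s' \<psi> i))\<^sup>2 \<le> infsum (\<lambda>i. C\<^sup>2 * (cmod (\<psi> i))\<^sup>2) UNIV"
    unfolding hnorm_sq[OF d]
    by (rule infsum_mono[OF hs_summable[OF d] summable_on_cmult_right[OF hs_summable[OF assms]] pw])
  also have "\<dots> = (C * hnorm \<psi>)\<^sup>2"
    by (simp add: infsum_cmult_right' hnorm_sq[OF assms] power_mult_distrib)
  finally show ?thesis unfolding C_def[symmetric]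
    by (rule power2_le_imp_le[OF _ mult_nonneg_nonneg[OF C hnorm_nonneg]])
qed

lemma hinner_evol_lip: assumes "b \<in> hyd_space" "\<psi> \<in> hyd_space"
  shows "cmod (hinner b (hyd_evol \<kappa> s \<psi>) - hinner b (hyd_evol \<kappa> s' \<psi>))
        \<le> hnorm b * (\<bar>s - s'\<bar> * (\<kappa>\<^sup>2 / 4) * hnorm \<psi>)"
proof -
  have "hinner b (hyd_evol \<kappa> s \<psi>) - hinner b (hyd_evol \<kappa> s' \<psi>)
      = hinner b (\<lambda>i. hyd_evol \<kappa> s \<psi> i - hyd_evol \<kappa> s' \<psi> i)"
    by (rule hinner_diff_right[symmetric]) (intro assms evol_in)+
  hence "cmod (hinner b (hyd_evol \<kappa> s \<psi>) - hinner b (hyd_evol \<kappa> s' \<psi>))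
      \<le> hnorm b * hnorm (\<lambda>i. hyd_evol \<kappa> s \<psi> i - hyd_evol \<kappa> s' \<psi> i)"
    using hinner_CS[OF assms(1) hs_diff[OF evol_in[OF assms(2)] evol_in[OF assms(2)]]] by simp
  also have "\<dots> \<le> hnorm b * (\<bar>s - s'\<bar> * (\<kappa>\<^sup>2 / 4) * hnorm \<psi>)"
    by (intro mult_left_mono evol_lip assms hnorm_nonneg)
  finally show ?thesis .
qed

lemma hinner_evol_cont: assumes "b \<in> hyd_space" "\<psi> \<in> hyd_space"
  shows "continuous_on A (\<lambda>s. hinner b (hyd_evol \<kappa> s \<psi>))"
proof (rule continuous_on_iff[THEN iffD2], intro ballI allI impI)
  fix s e :: real assume e: "e > 0"
  define M where "M = hnorm b * ((\<kappa>\<^sup>2 / 4) * hnorm \<psi>) + 1"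
  have M: "M > 0" unfolding M_def by (intro add_nonneg_pos mult_nonneg_nonneg hnorm_nonneg) auto
  show "\<exists>d>0. \<forall>s'\<in>A. dist s' s < d \<longrightarrow> dist (hinner b (hyd_evol \<kappa> s' \<psi>)) (hinner b (hyd_evol \<kappa> s \<psi>)) < e"
  proof (intro exI[of _ "e / M"] conjI ballI impI)
    show "e / M > 0" using e M by simp
    fix s' assume "s' \<in> A" "dist s' s < e / M"
    hence ds: "\<bar>s' - s\<bar> < e / M" by (simp add: dist_real_def)
    have "dist (hinner b (hyd_evol \<kappa> s' \<psi>)) (hinner b (hyd_evol \<kappa> s \<psi>))
        \<le> hnorm b * (\<bar>s' - s\<bar> * (\<kappa>\<^sup>2 / 4) * hnorm \<psi>)"
      unfolding dist_norm by (rule hinner_evol_lip[OF assms])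
    also have "\<dots> = \<bar>s' - s\<bar> * (hnorm b * ((\<kappa>\<^sup>2 / 4) * hnorm \<psi>))" by (simp add: algebra_simps)
    also have "\<dots> \<le> \<bar>s' - s\<bar> * M" unfolding M_def by (intro mult_left_mono) auto
    also have "\<dots> < e / M * M" using ds M by (intro mult_strict_right_mono) auto
    also have "\<dots> = e" using M by simp
    finally show "dist (hinner b (hyd_evol \<kappa> s' \<psi>)) (hinner b (hyd_evol \<kappa> s \<psi>)) < e" .
  qed
qed

lemma sqmod_evol_cont: assumes "b \<in> hyd_space" "\<psi> \<in> hyd_space"
  shows "continuous_on A (\<lambda>s. (cmod (hinner b (hyd_evol \<kappa> s \<psi>)))\<^sup>2)"
  by (intro continuous_intros hinner_evol_cont assms)

lemma ph_mult_cnj: "ph \<kappa> s n * cnj (ph \<kappa> s m)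
    = exp (\<i> * complex_of_real (s * (hyd_eigval \<kappa> m - hyd_eigval \<kappa> n)))"
proof -
  have "ph \<kappa> s n * cnj (ph \<kappa> s m)
      = exp (\<i> * complex_of_real (- (s * hyd_eigval \<kappa> n)) + cnj (\<i> * complex_of_real (- (s * hyd_eigval \<kappa> m))))"
    unfolding ph_def by (simp only: exp_cnj mult_exp_exp)
  also have "\<i> * complex_of_real (- (s * hyd_eigval \<kappa> n)) + cnj (\<i> * complex_of_real (- (s * hyd_eigval \<kappa> m)))
     = \<i> * complex_of_real (s * (hyd_eigval \<kappa> m - hyd_eigval \<kappa> n))"
    by (simp add: algebra_simps)
  finally show ?thesis .
qed

lemma sq_expand:
  assumes "finite S"
  shows "(cmod (\<Sum>n\<in>S. z n * ph \<kappa> s n))\<^sup>2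
   = Re (\<Sum>n\<in>S. \<Sum>m\<in>S. z n * cnj (z m) * exp (\<i> * complex_of_real (s * (hyd_eigval \<kappa> m - hyd_eigval \<kappa> n))))"
proof -
  define w where "w = (\<Sum>n\<in>S. z n * ph \<kappa> s n)"
  have "(cmod w)\<^sup>2 = Re (w * cnj w)"
    using complex_norm_square[of w] by (metis Re_complex_of_real of_real_power)
  also have "w * cnj w = (\<Sum>n\<in>S. \<Sum>m\<in>S. (z n * ph \<kappa> s n) * (cnj (z m) * cnj (ph \<kappa> s m)))"
    unfolding w_def by (simp add: sum_product)
  also have "\<dots> = (\<Sum>n\<in>S. \<Sum>m\<in>S. z n * cnj (z m) * exp (\<i> * complex_of_real (s * (hyd_eigval \<kappa> m - hyd_eigval \<kappa> n))))"
    by (intro sum.cong refl) (simp only: ph_mult_cnj[symmetric] mult_ac)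
  finally show ?thesis unfolding w_def .
qed

lemma exp_int_bound:
  assumes "t \<ge> 0" "\<omega> \<noteq> 0"
  shows "cmod (integral {0..t} (\<lambda>s. exp (\<i> * complex_of_real (s * \<omega>)))) \<le> 2 / \<bar>\<omega>\<bar>"
proof -
  define a where "a = \<i> * complex_of_real \<omega>"
  have a: "a \<noteq> 0" using assms by (simp add: a_def)
  have eq: "(\<lambda>s. exp (\<i> * complex_of_real (s * \<omega>))) = (\<lambda>s. exp (a * complex_of_real s))"
    by (simp add: a_def algebra_simps)
  have "integral {0..t} (\<lambda>s. exp (\<i> * complex_of_real (s * \<omega>))) = (exp (a * of_real t) - 1) / a"
    unfolding eq by (rule integral_exp[OF assms(1) a])
  also have "cmod \<dots> \<le> 2 / \<bar>\<omega>\<bar>"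
  proof -
    have "exp (a * of_real t) = exp (\<i> * of_real (\<omega> * t))" by (simp add: a_def algebra_simps)
    hence e1: "cmod (exp (a * of_real t)) = 1" by (simp only: norm_exp_i_times)
    have "cmod (exp (a * of_real t) - 1) \<le> cmod (exp (a * of_real t)) + cmod (1::complex)"
      by (rule norm_triangle_ineq4)
    hence "cmod (exp (a * of_real t) - 1) \<le> 2" unfolding e1 norm_one by simp
    moreover have "cmod a = \<bar>\<omega>\<bar>" by (simp add: a_def norm_mult)
    ultimately show ?thesis using assms(2) by (simp add: norm_divide divide_right_mono)
  qed
  finally show ?thesis .
qed

lemma exp_int_zero: assumes "t \<ge> 0"
  shows "integral {0..t} (\<lambda>s. exp (\<i> * complex_of_real (s * 0))) = complex_of_real t"
  using assms by (simp add: scaleR_conv_of_real)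

lemma exp_int_has: assumes "t \<ge> 0"
  shows "((\<lambda>s. exp (\<i> * complex_of_real (s * \<omega>))) has_integral
          integral {0..t} (\<lambda>s. exp (\<i> * complex_of_real (s * \<omega>)))) {0..t}"
  by (intro integrable_integral integrable_continuous_interval continuous_intros)

lemma omega_bound:
  fixes L n m :: nat and \<kappa> :: real
  assumes k: "\<kappa> > 0" and n: "n \<in> {L+1..2*L}" and m: "m \<in> {L+1..2*L}" and nm: "n \<noteq> m"
  shows "hyd_eigval \<kappa> m - hyd_eigval \<kappa> n \<noteq> 0"
    and "2 / \<bar>hyd_eigval \<kappa> m - hyd_eigval \<kappa> n\<bar> \<le> 16 * (real L)^3 / ((\<kappa>\<^sup>2/4) * \<bar>real n - real m\<bar>)"
proof -
  define x y where "x = real n" and "y = real m"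
  define \<Lambda> where "\<Lambda> = \<kappa>\<^sup>2/4"
  have \<Lambda>: "\<Lambda> > 0" using k by (simp add: \<Lambda>_def)
  have x: "real L + 1 \<le> x" "x \<le> 2 * real L" using n by (auto simp: x_def)
  have y: "real L + 1 \<le> y" "y \<le> 2 * real L" using m by (auto simp: y_def)
  have xy: "x \<noteq> y" using nm by (simp add: x_def y_def)
  have xp: "x > 0" "y > 0" using x y by linarith+
  have diff: "hyd_eigval \<kappa> m - hyd_eigval \<kappa> n = \<Lambda> * ((y - x) * (y + x)) / (x\<^sup>2 * y\<^sup>2)"
    using xp unfolding hyd_eigval_def \<Lambda>_def x_def[symmetric] y_def[symmetric]
    by (simp add: field_simps power2_eq_square)
  have absd: "\<bar>hyd_eigval \<kappa> m - hyd_eigval \<kappa> n\<bar> = \<Lambda> * (\<bar>y - x\<bar> * (y + x)) / (x\<^sup>2 * y\<^sup>2)"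
    unfolding diff using \<Lambda> xp by (simp add: abs_mult abs_divide)
  have pos: "\<Lambda> * (\<bar>y - x\<bar> * (y + x)) > 0" using \<Lambda> xp xy by simp
  thus "hyd_eigval \<kappa> m - hyd_eigval \<kappa> n \<noteq> 0" using absd xp by auto
  have L: "real L \<ge> 1" using x by linarith
  have x2: "x\<^sup>2 \<le> (2 * real L)\<^sup>2" using x xp by (intro power_mono) auto
  have y2: "y\<^sup>2 \<le> (2 * real L)\<^sup>2" using y xp by (intro power_mono) auto
  have "x\<^sup>2 * y\<^sup>2 \<le> (2 * real L)\<^sup>2 * (2 * real L)\<^sup>2" by (intro mult_mono x2 y2) auto
  also have "\<dots> = 8 * (real L)^3 * (2 * real L)" by (simp add: power2_eq_square power3_eq_cube)
  also have "\<dots> \<le> 8 * (real L)^3 * (y + x)" using x y L by (intro mult_left_mono) auto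
  finally have key: "2 * (x\<^sup>2 * y\<^sup>2) \<le> 16 * (real L)^3 * (y + x)" by (simp add: mult_ac)
  have "2 / \<bar>hyd_eigval \<kappa> m - hyd_eigval \<kappa> n\<bar> = 2 * (x\<^sup>2 * y\<^sup>2) / (\<Lambda> * (\<bar>y - x\<bar> * (y + x)))"
    unfolding absd using xp by (simp add: field_simps)
  also have "\<dots> \<le> 16 * (real L)^3 * (y + x) / (\<Lambda> * (\<bar>y - x\<bar> * (y + x)))"
    using pos key by (intro divide_right_mono) auto
  also have "\<dots> = 16 * (real L)^3 / (\<Lambda> * \<bar>x - y\<bar>)"
  proof -
    have "\<bar>y - x\<bar> > 0" "y + x > 0" using xp xy by auto
    thus ?thesis using \<Lambda> by (simp add: abs_minus_commute)
  qed
  finally show "2 / \<bar>hyd_eigval \<kappa> m - hyd_eigval \<kappa> n\<bar> \<le> 16 * (real L)^3 / ((\<kappa>\<^sup>2/4) * \<bar>real n - real m\<bar>)"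
    by (simp add: x_def y_def \<Lambda>_def)
qed

lemma inj_sum_le:
  fixes f :: "nat \<Rightarrow> real"
  assumes "inj_on g A" "g ` A \<subseteq> B" "finite B" "\<And>b. b \<in> B \<Longrightarrow> f b \<ge> 0"
  shows "(\<Sum>a\<in>A. f (g a)) \<le> (\<Sum>b\<in>B. f b)"
proof -
  have "(\<Sum>a\<in>A. f (g a)) = (\<Sum>b\<in>g ` A. f b)" using sum.reindex[OF assms(1), of f] by simp
  also have "\<dots> \<le> (\<Sum>b\<in>B. f b)" by (rule sum_mono2[OF assms(3,2)]) (use assms(2,4) in auto)
  finally show ?thesis .
qed

lemma harm_bound:
  fixes L n :: nat
  assumes n: "n \<in> {L+1..2*L}"
  shows "(\<Sum>m\<in>{L+1..2*L} - {n}. 1 / \<bar>real n - real m\<bar>) \<le> 2 * (\<Sum>d\<in>{1..L}. 1 / real d)"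
proof -
  define A where "A = {m\<in>{L+1..2*L}. m < n}"
  define B where "B = {m\<in>{L+1..2*L}. n < m}"
  have split: "{L+1..2*L} - {n} = A \<union> B" "A \<inter> B = {}" unfolding A_def B_def by auto
  have fin: "finite A" "finite B" unfolding A_def B_def by auto
  have "(\<Sum>m\<in>A. 1 / \<bar>real n - real m\<bar>) = (\<Sum>m\<in>A. (\<lambda>d. 1 / real d) (n - m))"
    by (intro sum.cong refl) (auto simp: A_def of_nat_diff)
  also have "\<dots> \<le> (\<Sum>d\<in>{1..L}. 1 / real d)"
    by (rule inj_sum_le) (use n in \<open>auto simp: A_def inj_on_def\<close>)
  finally have hA: "(\<Sum>m\<in>A. 1 / \<bar>real n - real m\<bar>) \<le> (\<Sum>d\<in>{1..L}. 1 / real d)" .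
  have "(\<Sum>m\<in>B. 1 / \<bar>real n - real m\<bar>) = (\<Sum>m\<in>B. (\<lambda>d. 1 / real d) (m - n))"
    by (intro sum.cong refl) (auto simp: B_def of_nat_diff)
  also have "\<dots> \<le> (\<Sum>d\<in>{1..L}. 1 / real d)"
    by (rule inj_sum_le) (use n in \<open>auto simp: B_def inj_on_def\<close>)
  finally have hB: "(\<Sum>m\<in>B. 1 / \<bar>real n - real m\<bar>) \<le> (\<Sum>d\<in>{1..L}. 1 / real d)" .
  have "(\<Sum>m\<in>{L+1..2*L} - {n}. 1 / \<bar>real n - real m\<bar>)
      = (\<Sum>m\<in>A. 1 / \<bar>real n - real m\<bar>) + (\<Sum>m\<in>B. 1 / \<bar>real n - real m\<bar>)"
    unfolding split(1) by (rule sum.union_disjoint[OF fin split(2)])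
  thus ?thesis using hA hB by linarith
qed

lemma sym_sum_bound:
  fixes a :: "nat \<Rightarrow> real" and W :: "nat \<Rightarrow> nat \<Rightarrow> real"
  assumes fin: "finite S" and sym: "\<And>n m. n \<in> S \<Longrightarrow> m \<in> S \<Longrightarrow> W n m = W m n"
    and nn: "\<And>n m. n \<in> S \<Longrightarrow> m \<in> S \<Longrightarrow> W n m \<ge> 0"
  shows "(\<Sum>n\<in>S. \<Sum>m\<in>S. a n * a m * W n m) \<le> (\<Sum>n\<in>S. (a n)\<^sup>2 * (\<Sum>m\<in>S. W n m))"
proof -
  have "(\<Sum>n\<in>S. \<Sum>m\<in>S. a n * a m * W n m)
      \<le> (\<Sum>n\<in>S. \<Sum>m\<in>S. ((a n)\<^sup>2 / 2) * W n m + ((a m)\<^sup>2 / 2) * W n m)"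
  proof (intro sum_mono)
    fix n m assume nm: "n \<in> S" "m \<in> S"
    have "2 * (a n * a m) \<le> (a n)\<^sup>2 + (a m)\<^sup>2"
    proof -
      have "0 \<le> (a n - a m)\<^sup>2" by simp
      thus ?thesis by (simp add: power2_eq_square algebra_simps)
    qed
    hence "a n * a m \<le> (a n)\<^sup>2 / 2 + (a m)\<^sup>2 / 2" by simp
    hence "a n * a m * W n m \<le> ((a n)\<^sup>2 / 2 + (a m)\<^sup>2 / 2) * W n m"
      by (rule mult_right_mono) (rule nn[OF nm])
    thus "a n * a m * W n m \<le> (a n)\<^sup>2 / 2 * W n m + (a m)\<^sup>2 / 2 * W n m"
      by (simp add: algebra_simps)
  qed
  also have "\<dots> = (\<Sum>n\<in>S. \<Sum>m\<in>S. ((a n)\<^sup>2 / 2) * W n m) + (\<Sum>n\<in>S. \<Sum>m\<in>S. ((a m)\<^sup>2 / 2) * W n m)"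
    by (simp add: sum.distrib)
  also have "(\<Sum>n\<in>S. \<Sum>m\<in>S. ((a m)\<^sup>2 / 2) * W n m) = (\<Sum>m\<in>S. \<Sum>n\<in>S. ((a m)\<^sup>2 / 2) * W n m)"
    by (rule sum.swap)
  also have "\<dots> = (\<Sum>m\<in>S. \<Sum>n\<in>S. ((a m)\<^sup>2 / 2) * W m n)"
    by (intro sum.cong refl) (simp add: sym)
  also have "(\<Sum>n\<in>S. \<Sum>m\<in>S. ((a n)\<^sup>2 / 2) * W n m) + (\<Sum>m\<in>S. \<Sum>n\<in>S. ((a m)\<^sup>2 / 2) * W m n)
      = (\<Sum>n\<in>S. (a n)\<^sup>2 * (\<Sum>m\<in>S. W n m))"
  proof -
    have X: "(\<Sum>n\<in>S. \<Sum>m\<in>S. ((a n)\<^sup>2 / 2) * W n m) = (\<Sum>n\<in>S. (a n)\<^sup>2 * (\<Sum>m\<in>S. W n m)) / 2"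
      by (simp add: sum_distrib_left sum_divide_distrib)
    show ?thesis by (simp only: X)
  qed
  finally show ?thesis .
qed

definition Hs :: "nat \<Rightarrow> real" where "Hs L = (\<Sum>d\<in>{1..L}. 1 / real d)"

lemma dephase:
  fixes z :: "nat \<Rightarrow> complex" and \<kappa> t :: real and L :: nat
  assumes k: "\<kappa> > 0" and t: "t \<ge> 0"
  shows "(\<lambda>s. (cmod (\<Sum>n\<in>{L+1..2*L}. z n * ph \<kappa> s n))\<^sup>2) integrable_on {0..t}"
    and "integral {0..t} (\<lambda>s. (cmod (\<Sum>n\<in>{L+1..2*L}. z n * ph \<kappa> s n))\<^sup>2)
       \<le> (\<Sum>n\<in>{L+1..2*L}. (cmod (z n))\<^sup>2) * (t + 32 * (real L)^3 * Hs L / (\<kappa>\<^sup>2/4))"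
proof -
  define S where "S = {L+1..2*L}"
  have fin: "finite S" by (simp add: S_def)
  define \<omega> where "\<omega> n m = hyd_eigval \<kappa> m - hyd_eigval \<kappa> n" for n m
  define c where "c n m = z n * cnj (z m)" for n m
  define E where "E n m = integral {0..t} (\<lambda>s. exp (\<i> * complex_of_real (s * \<omega> n m)))" for n m
  define G where "G s = (\<Sum>n\<in>S. \<Sum>m\<in>S. c n m * exp (\<i> * complex_of_real (s * \<omega> n m)))" for s
  define \<Lambda> where "\<Lambda> = \<kappa>\<^sup>2/4"
  have \<Lambda>: "\<Lambda> > 0" using k by (simp add: \<Lambda>_def)
  have hasG: "(G has_integral (\<Sum>n\<in>S. \<Sum>m\<in>S. c n m * E n m)) {0..t}"
    unfolding G_def E_def
    by (intro has_integral_sum fin has_integral_mult_right exp_int_has t)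
  have feq: "(\<lambda>s. (cmod (\<Sum>n\<in>S. z n * ph \<kappa> s n))\<^sup>2) = (\<lambda>s. Re (G s))"
    by (rule ext) (simp add: sq_expand[OF fin] G_def c_def \<omega>_def)
  have hasR: "((\<lambda>s. Re (G s)) has_integral Re (\<Sum>n\<in>S. \<Sum>m\<in>S. c n m * E n m)) {0..t}"
    using has_integral_linear[OF hasG bounded_linear_Re] by (simp add: o_def)
  show "(\<lambda>s. (cmod (\<Sum>n\<in>{L+1..2*L}. z n * ph \<kappa> s n))\<^sup>2) integrable_on {0..t}"
    using hasR feq unfolding S_def by (auto simp: integrable_on_def)
  define W where "W n m = (if n = m then t else 16 * (real L)^3 / (\<Lambda> * \<bar>real n - real m\<bar>))" for n m
  have Wsym: "W n m = W m n" for n m by (simp add: W_def abs_minus_commute mult_ac)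
  have Wnn: "W n m \<ge> 0" for n m using t \<Lambda> by (simp add: W_def)
  have Ebound: "cmod (E n m) \<le> W n m" if "n \<in> S" "m \<in> S" for n m
  proof (cases "n = m")
    case True
    have "E n m = complex_of_real t" unfolding E_def \<omega>_def True using exp_int_zero[OF t] by simp
    thus ?thesis using True t by (simp add: W_def)
  next
    case False
    have om: "\<omega> n m \<noteq> 0" using omega_bound(1)[OF k that[unfolded S_def] False] by (simp add: \<omega>_def)
    have "cmod (E n m) \<le> 2 / \<bar>\<omega> n m\<bar>" unfolding E_def by (rule exp_int_bound[OF t om])
    also have "\<dots> \<le> W n m"
      using omega_bound(2)[OF k that[unfolded S_def] False] False by (simp add: W_def \<omega>_def \<Lambda>_def)
    finally show ?thesis .
  qed
  have "integral {0..t} (\<lambda>s. (cmod (\<Sum>n\<in>S. z n * ph \<kappa> s n))\<^sup>2) = Re (\<Sum>n\<in>S. \<Sum>m\<in>S. c n m * E n m)"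
    unfolding feq using hasR by (rule integral_unique)
  also have "\<dots> \<le> cmod (\<Sum>n\<in>S. \<Sum>m\<in>S. c n m * E n m)" by (rule complex_Re_le_cmod)
  also have "\<dots> \<le> (\<Sum>n\<in>S. \<Sum>m\<in>S. cmod (c n m * E n m))"
    by (rule order_trans[OF norm_sum sum_mono[OF norm_sum]])
  also have "\<dots> \<le> (\<Sum>n\<in>S. \<Sum>m\<in>S. cmod (z n) * cmod (z m) * W n m)"
    by (intro sum_mono) (auto simp: c_def norm_mult intro!: mult_left_mono Ebound)
  also have "\<dots> \<le> (\<Sum>n\<in>S. (cmod (z n))\<^sup>2 * (\<Sum>m\<in>S. W n m))"
    by (rule sym_sum_bound[OF fin Wsym Wnn])
  also have "\<dots> \<le> (\<Sum>n\<in>S. (cmod (z n))\<^sup>2 * (t + 32 * (real L)^3 * Hs L / \<Lambda>))"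
  proof (intro sum_mono mult_left_mono)
    fix n assume n: "n \<in> S"
    have "(\<Sum>m\<in>S. W n m) = W n n + (\<Sum>m\<in>S - {n}. W n m)"
      by (rule sum.remove[OF fin n])
    also have "(\<Sum>m\<in>S - {n}. W n m) = (16 * (real L)^3 / \<Lambda>) * (\<Sum>m\<in>S - {n}. 1 / \<bar>real n - real m\<bar>)"
      by (simp add: sum_distrib_left W_def)
    also have "\<dots> \<le> (16 * (real L)^3 / \<Lambda>) * (2 * Hs L)"
      using harm_bound[OF n[unfolded S_def]] \<Lambda> unfolding S_def Hs_def
      by (intro mult_left_mono) auto
    finally show "(\<Sum>m\<in>S. W n m) \<le> t + 32 * (real L)^3 * Hs L / \<Lambda>"
      by (simp add: W_def)
  qed simp
  also have "\<dots> = (\<Sum>n\<in>S. (cmod (z n))\<^sup>2) * (t + 32 * (real L)^3 * Hs L / \<Lambda>)"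
    by (simp add: sum_distrib_right)
  finally show "integral {0..t} (\<lambda>s. (cmod (\<Sum>n\<in>{L+1..2*L}. z n * ph \<kappa> s n))\<^sup>2)
       \<le> (\<Sum>n\<in>{L+1..2*L}. (cmod (z n))\<^sup>2) * (t + 32 * (real L)^3 * Hs L / (\<kappa>\<^sup>2/4))"
    unfolding S_def \<Lambda>_def .
qed

definition eta :: "complex \<Rightarrow> nat \<Rightarrow> hvec" where
  "eta a L = (\<lambda>i. if fst i \<in> {L+1..2*L} \<and> snd i = (0,0) then a else 0)"

lemma sum_supp_has_sum:
  assumes "finite T" "\<And>i. i \<notin> T \<Longrightarrow> f i = 0"
  shows "(f has_sum (\<Sum>i\<in>T. f i)) UNIV"
  by (rule has_sum_finite_neutralI) (use assms in auto)

lemma eta_T: "(\<lambda>n. (n, 0::nat, 0::int)) ` {L+1..2*L} = {i. fst i \<in> {L+1..2*L} \<and> snd i = (0,0)}"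
  by force

lemma eta_out: "i \<notin> (\<lambda>n. (n, 0::nat, 0::int)) ` {L+1..2*L} \<Longrightarrow> eta a L i = 0"
  by (cases i) (auto simp: eta_def image_iff)

lemma eta_in: "eta a L \<in> hyd_space"
proof -
  define T where "T = (\<lambda>n. (n, 0::nat, 0::int)) ` {L+1..2*L}"
  have fT: "finite T" by (simp add: T_def)
  have "((\<lambda>i. (cmod (eta a L i))\<^sup>2) has_sum (\<Sum>i\<in>T. (cmod (eta a L i))\<^sup>2)) UNIV"
    by (rule sum_supp_has_sum[OF fT]) (simp add: T_def eta_out)
  hence "(\<lambda>i. (cmod (eta a L i))\<^sup>2) summable_on UNIV" by (rule has_sum_imp_summable)
  moreover have "eta a L i = 0" if "i \<notin> hyd_labels" for i
    using that by (cases i) (auto simp: eta_def hyd_labels_def)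
  ultimately show ?thesis by (auto simp: hyd_space_def)
qed

lemma eta_norm: "(hnorm (eta a L))\<^sup>2 = (cmod a)\<^sup>2 * real L"
proof -
  define T where "T = (\<lambda>n. (n, 0::nat, 0::int)) ` {L+1..2*L}"
  have fT: "finite T" by (simp add: T_def)
  have "((\<lambda>i. (cmod (eta a L i))\<^sup>2) has_sum (\<Sum>i\<in>T. (cmod (eta a L i))\<^sup>2)) UNIV"
    by (rule sum_supp_has_sum[OF fT]) (simp add: T_def eta_out)
  hence "(hnorm (eta a L))\<^sup>2 = (\<Sum>i\<in>T. (cmod (eta a L i))\<^sup>2)"
    using hnorm_sq[OF eta_in] infsumI by metis
  also have "\<dots> = (\<Sum>n\<in>{L+1..2*L}. (cmod (eta a L (n, 0, 0)))\<^sup>2)"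
    unfolding T_def by (subst sum.reindex) (auto simp: inj_on_def o_def)
  also have "\<dots> = (\<Sum>n\<in>{L+1..2*L}. (cmod a)\<^sup>2)"
    by (intro sum.cong refl) (simp add: eta_def)
  finally show ?thesis by simp
qed

lemma hinner_eta_evol:
  "hinner b (hyd_evol \<kappa> s (eta a L)) = (\<Sum>n\<in>{L+1..2*L}. (cnj (b (n,0,0)) * a) * ph \<kappa> s n)"
proof -
  define T where "T = (\<lambda>n. (n, 0::nat, 0::int)) ` {L+1..2*L}"
  have fT: "finite T" by (simp add: T_def)
  have "((\<lambda>i. cnj (b i) * hyd_evol \<kappa> s (eta a L) i) has_sum
        (\<Sum>i\<in>T. cnj (b i) * hyd_evol \<kappa> s (eta a L) i)) UNIV"
    by (rule sum_supp_has_sum[OF fT]) (simp add: evol_eq T_def eta_out)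
  hence "hinner b (hyd_evol \<kappa> s (eta a L)) = (\<Sum>i\<in>T. cnj (b i) * hyd_evol \<kappa> s (eta a L) i)"
    unfolding hinner_def by (rule infsumI)
  also have "\<dots> = (\<Sum>n\<in>{L+1..2*L}. cnj (b (n,0,0)) * hyd_evol \<kappa> s (eta a L) (n,0,0))"
    unfolding T_def by (subst sum.reindex) (auto simp: inj_on_def o_def)
  also have "\<dots> = (\<Sum>n\<in>{L+1..2*L}. (cnj (b (n,0,0)) * a) * ph \<kappa> s n)"
    by (intro sum.cong refl) (simp add: evol_eq eta_def)
  finally show ?thesis .
qed

lemma level_coords_le: assumes "b \<in> hyd_space"
  shows "(\<Sum>n\<in>{L+1..2*L}. (cmod (b (n,0,0)))\<^sup>2) \<le> (hnorm b)\<^sup>2"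
proof -
  have "(\<Sum>n\<in>{L+1..2*L}. (cmod (b (n,0,0)))\<^sup>2) = (\<Sum>i\<in>(\<lambda>n. (n, 0::nat, 0::int)) ` {L+1..2*L}. (cmod (b i))\<^sup>2)"
    by (subst sum.reindex) (auto simp: inj_on_def o_def)
  also have "\<dots> \<le> (hnorm b)\<^sup>2" by (rule sum_sq_le_hnorm_sq[OF assms]) simp
  finally show ?thesis .
qed

abbreviation fk :: "real \<Rightarrow> (nat \<Rightarrow> hvec) \<Rightarrow> hvec \<Rightarrow> nat \<Rightarrow> real \<Rightarrow> real" where
  "fk \<kappa> B \<psi> k s \<equiv> (cmod (hinner (B k) (hyd_evol \<kappa> s \<psi>)))\<^sup>2"

lemma fk_int: assumes "hyd_onb B" "k \<ge> 1" "\<psi> \<in> hyd_space"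
  shows "(\<lambda>s. fk \<kappa> B \<psi> k s) integrable_on {0..t}"
  by (intro integrable_continuous_interval sqmod_evol_cont onb_in assms)

lemma beta_int:
  assumes k: "\<kappa> > 0" and t: "t \<ge> 0" and onb: "hyd_onb B"
  shows "(\<lambda>s. \<Sum>k\<in>{1..N}. fk \<kappa> B (eta a L) k s) integrable_on {0..t}"
    and "integral {0..t} (\<lambda>s. \<Sum>k\<in>{1..N}. fk \<kappa> B (eta a L) k s)
         \<le> real N * (cmod a)\<^sup>2 * (t + 32 * (real L)^3 * Hs L / (\<kappa>\<^sup>2/4))"
proof -
  have int: "(\<lambda>s. fk \<kappa> B (eta a L) k s) integrable_on {0..t}" if "k \<in> {1..N}" for k
    using that by (intro fk_int onb eta_in) auto
  show "(\<lambda>s. \<Sum>k\<in>{1..N}. fk \<kappa> B (eta a L) k s) integrable_on {0..t}"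
    by (rule integrable_sum) (use int in auto)
  have "integral {0..t} (\<lambda>s. \<Sum>k\<in>{1..N}. fk \<kappa> B (eta a L) k s)
      = (\<Sum>k\<in>{1..N}. integral {0..t} (\<lambda>s. fk \<kappa> B (eta a L) k s))"
    by (rule integral_sum) (use int in auto)
  also have "\<dots> \<le> (\<Sum>k\<in>{1..N}. (cmod a)\<^sup>2 * (t + 32 * (real L)^3 * Hs L / (\<kappa>\<^sup>2/4)))"
  proof (rule sum_mono)
    fix k assume kN: "k \<in> {1..N}"
    have Bk: "B k \<in> hyd_space" using kN by (intro onb_in onb) auto
    define z where "z n = cnj (B k (n,0,0)) * a" for n
    have "integral {0..t} (\<lambda>s. fk \<kappa> B (eta a L) k s)
        = integral {0..t} (\<lambda>s. (cmod (\<Sum>n\<in>{L+1..2*L}. z n * ph \<kappa> s n))\<^sup>2)"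
      by (simp add: hinner_eta_evol z_def)
    also have "\<dots> \<le> (\<Sum>n\<in>{L+1..2*L}. (cmod (z n))\<^sup>2) * (t + 32 * (real L)^3 * Hs L / (\<kappa>\<^sup>2/4))"
      by (rule dephase(2)[OF k t])
    also have "\<dots> \<le> (cmod a)\<^sup>2 * (t + 32 * (real L)^3 * Hs L / (\<kappa>\<^sup>2/4))"
    proof (rule mult_right_mono)
      have "(\<Sum>n\<in>{L+1..2*L}. (cmod (z n))\<^sup>2) = (cmod a)\<^sup>2 * (\<Sum>n\<in>{L+1..2*L}. (cmod (B k (n,0,0)))\<^sup>2)"
        by (simp add: z_def norm_mult power_mult_distrib sum_distrib_left mult_ac)
      also have "\<dots> \<le> (cmod a)\<^sup>2 * (hnorm (B k))\<^sup>2"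
        by (intro mult_left_mono level_coords_le Bk) simp
      also have "\<dots> = (cmod a)\<^sup>2" using onb_norm1[OF onb, of k] kN by simp
      finally show "(\<Sum>n\<in>{L+1..2*L}. (cmod (z n))\<^sup>2) \<le> (cmod a)\<^sup>2" .
      have "Hs L \<ge> 0" unfolding Hs_def by (intro sum_nonneg) auto
      thus "0 \<le> t + 32 * (real L)^3 * Hs L / (\<kappa>\<^sup>2/4)" using t by simp
    qed
    finally show "integral {0..t} (\<lambda>s. fk \<kappa> B (eta a L) k s)
       \<le> (cmod a)\<^sup>2 * (t + 32 * (real L)^3 * Hs L / (\<kappa>\<^sup>2/4))" .
  qed
  also have "\<dots> = real N * (cmod a)\<^sup>2 * (t + 32 * (real L)^3 * Hs L / (\<kappa>\<^sup>2/4))" by simp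
  finally show "integral {0..t} (\<lambda>s. \<Sum>k\<in>{1..N}. fk \<kappa> B (eta a L) k s)
         \<le> real N * (cmod a)\<^sup>2 * (t + 32 * (real L)^3 * Hs L / (\<kappa>\<^sup>2/4))" .
qed

lemma pointwise_bound:
  assumes onb: "hyd_onb B" and x: "x \<in> hyd_space" and y: "y \<in> hyd_space"
  shows "(\<Sum>k\<in>{1..N}. fk \<kappa> B (\<lambda>i. x i + y i) k s)
       \<le> (hnorm x + sqrt (\<Sum>k\<in>{1..N}. fk \<kappa> B y k s))\<^sup>2"
proof -
  have orth: "ortho {1..N} B" by (rule onb_ortho[OF onb]) auto
  have Bk: "B k \<in> hyd_space" if "k \<in> {1..N}" for k using that by (intro onb_in onb) auto
  define u where "u k = hinner (B k) (hyd_evol \<kappa> s x)" for k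
  define v where "v k = hinner (B k) (hyd_evol \<kappa> s y)" for k
  have uv: "hinner (B k) (hyd_evol \<kappa> s (\<lambda>i. x i + y i)) = u k + v k" if "k \<in> {1..N}" for k
    unfolding evol_add u_def v_def by (rule hinner_add_right[OF Bk[OF that] evol_in[OF x] evol_in[OF y]])
  have "sqrt (\<Sum>k\<in>{1..N}. fk \<kappa> B (\<lambda>i. x i + y i) k s) = L2_set (\<lambda>k. cmod (u k + v k)) {1..N}"
    unfolding L2_set_def using uv by simp
  also have "\<dots> \<le> L2_set (\<lambda>k. cmod (u k) + cmod (v k)) {1..N}"
    by (intro L2_set_mono norm_triangle_ineq) auto
  also have "\<dots> \<le> L2_set (\<lambda>k. cmod (u k)) {1..N} + L2_set (\<lambda>k. cmod (v k)) {1..N}"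
    by (rule L2_set_triangle_ineq)
  also have "L2_set (\<lambda>k. cmod (u k)) {1..N} \<le> hnorm x"
  proof -
    have "(\<Sum>k\<in>{1..N}. (cmod (u k))\<^sup>2) \<le> (hnorm (hyd_evol \<kappa> s x))\<^sup>2"
      unfolding u_def by (rule bessel_fin[OF orth _ evol_in[OF x]]) simp
    thus ?thesis unfolding L2_set_def evol_norm by (intro real_le_lsqrt hnorm_nonneg) auto
  qed
  finally have "sqrt (\<Sum>k\<in>{1..N}. fk \<kappa> B (\<lambda>i. x i + y i) k s)
      \<le> hnorm x + sqrt (\<Sum>k\<in>{1..N}. fk \<kappa> B y k s)"
    unfolding L2_set_def v_def by simp
  moreover have "0 \<le> (\<Sum>k\<in>{1..N}. fk \<kappa> B (\<lambda>i. x i + y i) k s)" by (intro sum_nonneg) auto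
  ultimately show ?thesis
    using power_mono[of "sqrt (\<Sum>k\<in>{1..N}. fk \<kappa> B (\<lambda>i. x i + y i) k s)" _ 2] by simp
qed

lemma fk_nonneg: "fk \<kappa> B \<psi> k s \<ge> 0" by simp

lemma sumfk_le: assumes "hyd_onb B" "\<psi> \<in> hyd_space"
  shows "(\<Sum>k\<in>{1..K}. fk \<kappa> B \<psi> k s) \<le> (hnorm \<psi>)\<^sup>2"
proof -
  have "(\<Sum>k\<in>{1..K}. fk \<kappa> B \<psi> k s) \<le> (hnorm (hyd_evol \<kappa> s \<psi>))\<^sup>2"
    by (rule bessel_fin[OF onb_ortho[OF assms(1)] _ evol_in[OF assms(2)]]) auto
  thus ?thesis by (simp add: evol_norm)
qed

lemma sumfk_int: assumes "hyd_onb B" "\<psi> \<in> hyd_space" "A \<subseteq> {1..}" "finite A"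
  shows "(\<lambda>s. \<Sum>k\<in>A. fk \<kappa> B \<psi> k s) integrable_on {0..t}"
  by (rule integrable_sum) (use assms in \<open>auto intro!: fk_int\<close>)

lemma parseval_int:
  assumes onb: "hyd_onb B" and psi: "\<psi> \<in> hyd_space" and t: "t \<ge> 0"
  shows "(\<lambda>K. integral {0..t} (\<lambda>s. \<Sum>k\<in>{1..K}. fk \<kappa> B \<psi> k s)) \<longlonglongrightarrow> t * (hnorm \<psi>)\<^sup>2"
proof -
  have mct: "(\<lambda>s. (hnorm \<psi>)\<^sup>2) integrable_on {0..t} \<and>
     (\<lambda>K. integral {0..t} (\<lambda>s. \<Sum>k\<in>{1..K}. fk \<kappa> B \<psi> k s)) \<longlonglongrightarrow> integral {0..t} (\<lambda>s. (hnorm \<psi>)\<^sup>2)"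
  proof (rule monotone_convergence_increasing)
    show "(\<lambda>s. \<Sum>k\<in>{1..K}. fk \<kappa> B \<psi> k s) integrable_on {0..t}" for K
      by (rule sumfk_int[OF onb psi]) auto
    show "(\<Sum>k\<in>{1..K}. fk \<kappa> B \<psi> k s) \<le> (\<Sum>k\<in>{1..Suc K}. fk \<kappa> B \<psi> k s)" for K s
      by (rule sum_mono2) auto
    show "(\<lambda>K. \<Sum>k\<in>{1..K}. fk \<kappa> B \<psi> k s) \<longlonglongrightarrow> (hnorm \<psi>)\<^sup>2" for s
      using parseval[OF onb evol_in[OF psi], of \<kappa> s] unfolding evol_norm .
    show "bounded (range (\<lambda>K. integral {0..t} (\<lambda>s. \<Sum>k\<in>{1..K}. fk \<kappa> B \<psi> k s)))"
    proof (rule boundedI[of _ "t * (hnorm \<psi>)\<^sup>2"])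
      fix y assume "y \<in> range (\<lambda>K. integral {0..t} (\<lambda>s. \<Sum>k\<in>{1..K}. fk \<kappa> B \<psi> k s))"
      then obtain K where y: "y = integral {0..t} (\<lambda>s. \<Sum>k\<in>{1..K}. fk \<kappa> B \<psi> k s)" by blast
      have i1: "(\<lambda>s. \<Sum>k\<in>{1..K}. fk \<kappa> B \<psi> k s) integrable_on {0..t}"
        by (rule sumfk_int[OF onb psi]) auto
      have "y \<ge> 0" unfolding y by (rule integral_nonneg[OF i1]) (simp add: sum_nonneg)
      moreover have "y \<le> integral {0..t} (\<lambda>s. (hnorm \<psi>)\<^sup>2)"
        unfolding y
      proof (rule integral_le[OF i1])
        show "(\<lambda>s. (hnorm \<psi>)\<^sup>2) integrable_on {0..t}"
          by (intro integrable_continuous_interval continuous_intros)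
        show "\<And>s. s \<in> {0..t} \<Longrightarrow> (\<Sum>k\<in>{1..K}. fk \<kappa> B \<psi> k s) \<le> (hnorm \<psi>)\<^sup>2"
          by (rule sumfk_le[OF onb psi])
      qed
      ultimately show "norm y \<le> t * (hnorm \<psi>)\<^sup>2" using t by simp
    qed
  qed
  thus ?thesis using t by simp
qed

lemma ereal_moment_lower:
  fixes W :: "nat \<Rightarrow> real"
  assumes Wnn: "\<And>k. W k \<ge> 0" and p: "p > 0" and N: "N \<ge> 1" and c: "(\<Sum>k\<in>{N+1..K}. W k) \<ge> c"
  shows "ereal (real N powr p * c) \<le> (\<Sum>k. if k = 0 then 0 else ereal (real k powr p * W k))"
proof -
  define T where "T k = (if k = 0 then 0 else ereal (real k powr p * W k))" for k
  have Tnn: "0 \<le> T k" for k unfolding T_def using Wnn by simp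
  have s1: "real N powr p * c \<le> (\<Sum>k\<in>{N+1..K}. real N powr p * W k)"
  proof -
    have "real N powr p * c \<le> real N powr p * (\<Sum>k\<in>{N+1..K}. W k)"
      using c by (intro mult_left_mono) auto
    thus ?thesis by (simp add: sum_distrib_left)
  qed
  have s2: "(\<Sum>k\<in>{N+1..K}. real N powr p * W k) \<le> (\<Sum>k\<in>{N+1..K}. real k powr p * W k)"
  proof (rule sum_mono)
    fix k assume k: "k \<in> {N+1..K}"
    have "real N powr p \<le> real k powr p" using k p by (intro powr_mono2) auto
    thus "real N powr p * W k \<le> real k powr p * W k" by (rule mult_right_mono) (rule Wnn)
  qed
  have s3: "ereal (\<Sum>k\<in>{N+1..K}. real k powr p * W k) = (\<Sum>k\<in>{N+1..K}. T k)"
  proof -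
    have "(\<Sum>k\<in>{N+1..K}. T k) = (\<Sum>k\<in>{N+1..K}. ereal (real k powr p * W k))"
      by (intro sum.cong refl) (use N in \<open>simp add: T_def\<close>)
    also have "\<dots> = ereal (\<Sum>k\<in>{N+1..K}. real k powr p * W k)" by (rule sum_ereal)
    finally show ?thesis by simp
  qed
  have s4: "(\<Sum>k\<in>{N+1..K}. T k) \<le> (\<Sum>k\<in>{..<Suc K}. T k)"
    by (rule sum_mono2[OF finite_lessThan]) (auto intro: Tnn)
  have s5: "(\<Sum>k\<in>{..<Suc K}. T k) \<le> (\<Sum>k. T k)" by (rule suminf_upper[OF Tnn])
  have "ereal (real N powr p * c) \<le> ereal (\<Sum>k\<in>{N+1..K}. real k powr p * W k)"
    using s1 s2 by simp
  also have "\<dots> \<le> (\<Sum>k. T k)" using s3 s4 s5 by simp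
  finally show ?thesis unfolding T_def .
qed

lemma hydW_nonneg: assumes "t > 0" shows "hyd_W \<kappa> b \<psi> t \<ge> 0"
proof (cases "(\<lambda>s. (cmod (hinner b (hyd_evol \<kappa> s \<psi>)))\<^sup>2) integrable_on {0..t}")
  case True
  hence "integral {0..t} (\<lambda>s. (cmod (hinner b (hyd_evol \<kappa> s \<psi>)))\<^sup>2) \<ge> 0"
    by (rule integral_nonneg) simp
  thus ?thesis using assms by (simp add: hyd_W_def)
next
  case False thus ?thesis by (simp add: hyd_W_def not_integrable_integral)
qed

lemma sq_bound_aux:
  fixes A b e :: real
  assumes "A \<ge> 0" "b \<ge> 0" "e > 0"
  shows "(A + sqrt b)\<^sup>2 \<le> A\<^sup>2 + e + (1 + A\<^sup>2 / e) * b"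
proof -
  have "0 \<le> (e - A * sqrt b)\<^sup>2 / e" using assms by simp
  also have "(e - A * sqrt b)\<^sup>2 / e = e - 2 * A * sqrt b + A\<^sup>2 * b / e"
    using assms by (simp add: power2_eq_square field_simps)
  finally have "2 * A * sqrt b \<le> e + A\<^sup>2 * b / e" by simp
  moreover have "(A + sqrt b)\<^sup>2 = A\<^sup>2 + 2 * A * sqrt b + b"
    using assms by (simp add: power2_sum)
  ultimately show ?thesis by (simp add: algebra_simps)
qed

lemma core:
  fixes \<kappa> t A p :: real and N L :: nat and a :: complex
  assumes k: "\<kappa> > 0" and onb: "hyd_onb B" and psi: "\<psi> \<in> hyd_space" and t: "t > 0"
    and N: "N \<ge> 1" and a: "a \<noteq> 0" and p: "p > 0"
    and hA: "hnorm (\<lambda>i. \<psi> i - eta a L i) \<le> A"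
    and h1: "(cmod a)\<^sup>2 * real L / 2 \<le> (hnorm \<psi>)\<^sup>2 - A\<^sup>2"
    and h2: "32 * (real L)^3 * Hs L \<le> t * (\<kappa>\<^sup>2/4)"
    and h3: "32 * real N * (1 + 8 * A\<^sup>2 / ((cmod a)\<^sup>2 * real L)) \<le> real L"
  shows "ereal (real N powr p * ((cmod a)\<^sup>2 * real L / 8)) \<le> hyd_moment_sum \<kappa> p B \<psi> t"
proof -
  define x where "x = (\<lambda>i. \<psi> i - eta a L i)"
  have x: "x \<in> hyd_space" unfolding x_def by (rule hs_diff[OF psi eta_in])
  have psix: "\<psi> = (\<lambda>i. x i + eta a L i)" by (simp add: x_def)
  define c where "c = (cmod a)\<^sup>2 * real L"
  define D where "D = 1 + 8 * A\<^sup>2 / c"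
  have A0: "A \<ge> 0" using hA hnorm_nonneg order_trans by blast
  have D1: "D \<ge> 1"
  proof -
    have "real L \<ge> 0" by simp
    hence "c \<ge> 0" unfolding c_def by simp
    thus ?thesis unfolding D_def by simp
  qed
  have L32: "real L \<ge> 32"
  proof -
    have "32 * real N * 1 \<le> 32 * real N * D" using D1 by (intro mult_left_mono) auto
    hence "32 * real N \<le> real L" using h3 unfolding D_def c_def by simp
    thus ?thesis using N by simp
  qed
  have c: "c > 0" unfolding c_def using a L32 by simp
  define \<epsilon> where "\<epsilon> = c / 8"
  have eps: "\<epsilon> > 0" unfolding \<epsilon>_def using c by simp
  have De: "1 + A\<^sup>2 / \<epsilon> = D" unfolding D_def \<epsilon>_def by simp
  define \<beta> where "\<beta> s = (\<Sum>k\<in>{1..N}. fk \<kappa> B (eta a L) k s)" for s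
  have \<beta>nn: "\<beta> s \<ge> 0" for s unfolding \<beta>_def by (intro sum_nonneg) simp
  have \<beta>int: "\<beta> integrable_on {0..t}" unfolding \<beta>_def using beta_int(1)[OF k _ onb] t by simp
  have \<beta>bound: "integral {0..t} \<beta> \<le> real N * (cmod a)\<^sup>2 * (2 * t)"
  proof -
    have "integral {0..t} \<beta> \<le> real N * (cmod a)\<^sup>2 * (t + 32 * (real L)^3 * Hs L / (\<kappa>\<^sup>2/4))"
      unfolding \<beta>_def using beta_int(2)[OF k _ onb] t by simp
    also have "\<dots> \<le> real N * (cmod a)\<^sup>2 * (2 * t)"
    proof (rule mult_left_mono)
      have "32 * (real L)^3 * Hs L / (\<kappa>\<^sup>2/4) \<le> t" using h2 k by (simp add: divide_le_eq)
      thus "t + 32 * (real L)^3 * Hs L / (\<kappa>\<^sup>2/4) \<le> 2 * t" by simp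
    qed simp
    finally show ?thesis .
  qed
  define IN where "IN = integral {0..t} (\<lambda>s. \<Sum>k\<in>{1..N}. fk \<kappa> B \<psi> k s)"
  have INint: "(\<lambda>s. \<Sum>k\<in>{1..N}. fk \<kappa> B \<psi> k s) integrable_on {0..t}"
    by (rule sumfk_int[OF onb psi]) auto
  have hasR: "((\<lambda>s. (A\<^sup>2 + \<epsilon>) + D * \<beta> s) has_integral (t * (A\<^sup>2 + \<epsilon>) + D * integral {0..t} \<beta>)) {0..t}"
  proof -
    have hc: "((\<lambda>s. A\<^sup>2 + \<epsilon>) has_integral t * (A\<^sup>2 + \<epsilon>)) {0..t}"
      using has_integral_const_real[of "A\<^sup>2 + \<epsilon>" 0 t] t by simp
    show ?thesis
      by (intro has_integral_add hc has_integral_mult_right integrable_integral \<beta>int)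
  qed
  have IN_le: "IN \<le> t * (A\<^sup>2 + \<epsilon>) + D * integral {0..t} \<beta>"
  proof -
    have "IN \<le> integral {0..t} (\<lambda>s. (A\<^sup>2 + \<epsilon>) + D * \<beta> s)"
      unfolding IN_def
    proof (rule integral_le[OF INint])
      show "(\<lambda>s. (A\<^sup>2 + \<epsilon>) + D * \<beta> s) integrable_on {0..t}" using hasR by blast
      fix s assume "s \<in> {0..t}"
      have "(\<Sum>k\<in>{1..N}. fk \<kappa> B \<psi> k s) \<le> (hnorm x + sqrt (\<beta> s))\<^sup>2"
        unfolding \<beta>_def by (subst psix, rule pointwise_bound[OF onb x eta_in])
      also have "\<dots> \<le> (A + sqrt (\<beta> s))\<^sup>2"
        using hA hnorm_nonneg[of x] \<beta>nn[of s] unfolding x_def[symmetric]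
        by (intro power_mono add_right_mono) auto
      also have "\<dots> \<le> A\<^sup>2 + \<epsilon> + (1 + A\<^sup>2 / \<epsilon>) * \<beta> s" by (rule sq_bound_aux[OF A0 \<beta>nn eps])
      finally show "(\<Sum>k\<in>{1..N}. fk \<kappa> B \<psi> k s) \<le> (A\<^sup>2 + \<epsilon>) + D * \<beta> s" using De by simp
    qed
    also have "\<dots> = t * (A\<^sup>2 + \<epsilon>) + D * integral {0..t} \<beta>" using hasR by (rule integral_unique)
    finally show ?thesis .
  qed
  have DN: "D * (real N * (cmod a)\<^sup>2 * (2 * t)) \<le> t * (c / 16)"
  proof -
    have "32 * real N * D \<le> real L" using h3 unfolding D_def c_def by simp
    hence "(32 * real N * D) * ((cmod a)\<^sup>2 * t) \<le> real L * ((cmod a)\<^sup>2 * t)"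
      using t by (intro mult_right_mono) auto
    thus ?thesis unfolding c_def by (simp add: algebra_simps)
  qed
  have IN_le2: "IN \<le> t * (A\<^sup>2 + c * 3 / 16)"
  proof -
    have "D * integral {0..t} \<beta> \<le> D * (real N * (cmod a)\<^sup>2 * (2 * t))"
      using \<beta>bound D1 by (intro mult_left_mono) auto
    thus ?thesis using IN_le DN unfolding \<epsilon>_def by (simp add: algebra_simps)
  qed
  define J where "J K = integral {0..t} (\<lambda>s. \<Sum>k\<in>{1..K}. fk \<kappa> B \<psi> k s)" for K
  have Jlim: "J \<longlonglongrightarrow> t * (hnorm \<psi>)\<^sup>2" unfolding J_def using parseval_int[OF onb psi] t by simp
  have "t * (hnorm \<psi>)\<^sup>2 - t * (c / 8) < t * (hnorm \<psi>)\<^sup>2" using t c by simp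
  from order_tendstoD(1)[OF Jlim this] obtain K0 where
    K0: "\<And>K. K \<ge> K0 \<Longrightarrow> J K > t * (hnorm \<psi>)\<^sup>2 - t * (c / 8)"
    unfolding eventually_sequentially by blast
  define K where "K = max K0 N"
  have KN: "K \<ge> N" "K \<ge> K0" unfolding K_def by auto
  have split: "{1..K} = {1..N} \<union> {N+1..K}" "{1..N} \<inter> {N+1..K} = {}" using KN by auto
  have int2: "(\<lambda>s. \<Sum>k\<in>{N+1..K}. fk \<kappa> B \<psi> k s) integrable_on {0..t}"
    by (rule sumfk_int[OF onb psi]) auto
  have JK: "J K = IN + integral {0..t} (\<lambda>s. \<Sum>k\<in>{N+1..K}. fk \<kappa> B \<psi> k s)"
  proof -
    have "J K = integral {0..t} (\<lambda>s. (\<Sum>k\<in>{1..N}. fk \<kappa> B \<psi> k s) + (\<Sum>k\<in>{N+1..K}. fk \<kappa> B \<psi> k s))"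
    proof -
      have "\<And>s. (\<Sum>k\<in>{1..K}. fk \<kappa> B \<psi> k s) = (\<Sum>k\<in>{1..N}. fk \<kappa> B \<psi> k s) + (\<Sum>k\<in>{N+1..K}. fk \<kappa> B \<psi> k s)"
        unfolding split(1) by (rule sum.union_disjoint[OF _ _ split(2)]) auto
      thus ?thesis unfolding J_def by presburger
    qed
    also have "\<dots> = IN + integral {0..t} (\<lambda>s. \<Sum>k\<in>{N+1..K}. fk \<kappa> B \<psi> k s)"
      unfolding IN_def by (rule integral_add[OF INint int2])
    finally show ?thesis .
  qed
  have sumint: "integral {0..t} (\<lambda>s. \<Sum>k\<in>{N+1..K}. fk \<kappa> B \<psi> k s)
       = t * (\<Sum>k\<in>{N+1..K}. hyd_W \<kappa> (B k) \<psi> t)"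
  proof -
    have "integral {0..t} (\<lambda>s. \<Sum>k\<in>{N+1..K}. fk \<kappa> B \<psi> k s)
        = (\<Sum>k\<in>{N+1..K}. integral {0..t} (\<lambda>s. fk \<kappa> B \<psi> k s))"
      by (rule integral_sum) (auto intro!: fk_int onb psi)
    also have "\<dots> = (\<Sum>k\<in>{N+1..K}. t * hyd_W \<kappa> (B k) \<psi> t)"
      using t by (intro sum.cong refl) (simp add: hyd_W_def)
    finally show ?thesis by (simp add: sum_distrib_left)
  qed
  have "t * (\<Sum>k\<in>{N+1..K}. hyd_W \<kappa> (B k) \<psi> t) \<ge> t * (c / 8)"
  proof -
    have "t * (\<Sum>k\<in>{N+1..K}. hyd_W \<kappa> (B k) \<psi> t) = J K - IN" using JK sumint by simp
    also have "J K - IN \<ge> t * (c / 8)"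
    proof -
      have "J K > t * (hnorm \<psi>)\<^sup>2 - t * (c / 8)" by (rule K0[OF KN(2)])
      moreover have "t * (A\<^sup>2 + c / 2) \<le> t * (hnorm \<psi>)\<^sup>2"
        using h1 t unfolding c_def by (intro mult_left_mono) auto
      moreover have "t * (A\<^sup>2 + c / 2) - t * (c / 8) - t * (A\<^sup>2 + c * 3 / 16) = t * (c / 8) + t * (c / 16)"
        by (simp add: algebra_simps)
      moreover have "t * (c / 16) \<ge> 0" using t c by simp
      ultimately show ?thesis using IN_le2 by linarith
    qed
    finally show ?thesis .
  qed
  hence Wsum: "(\<Sum>k\<in>{N+1..K}. hyd_W \<kappa> (B k) \<psi> t) \<ge> c / 8" using t by simp
  show ?thesis unfolding hyd_moment_sum_def c_def[symmetric]
    by (rule ereal_moment_lower[OF hydW_nonneg[OF t] p N Wsum])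
qed

definition Fset :: "real \<Rightarrow> nat \<Rightarrow> hvec set" where
  "Fset \<kappa> j = {\<psi> \<in> hyd_space. \<exists>t a L A N. t \<ge> real j + 2 \<and> a \<noteq> 0 \<and> N \<ge> 1 \<and>
     hnorm (\<lambda>i. \<psi> i - eta a L i) < A \<and> (cmod a)\<^sup>2 * real L / 2 < (hnorm \<psi>)\<^sup>2 - A\<^sup>2 \<and>
     32 * (real L)^3 * Hs L \<le> t * (\<kappa>\<^sup>2/4) \<and>
     32 * real N * (1 + 8 * A\<^sup>2 / ((cmod a)\<^sup>2 * real L)) \<le> real L \<and>
     t powr (1/3 - 1/(real j + 3)) \<le> real N \<and> t powr (- (1/(real j + 3))) \<le> (cmod a)\<^sup>2 * real L / 8}"

lemma Fset_open: "hyd_open (Fset \<kappa> j)"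
  unfolding hyd_open_def
proof (intro conjI ballI)
  show "Fset \<kappa> j \<subseteq> hyd_space" unfolding Fset_def by auto
  fix \<psi> assume "\<psi> \<in> Fset \<kappa> j"
  then obtain t a L A N where psi: "\<psi> \<in> hyd_space" and w: "t \<ge> real j + 2" "a \<noteq> 0" "N \<ge> 1"
     "hnorm (\<lambda>i. \<psi> i - eta a L i) < A" "(cmod a)\<^sup>2 * real L / 2 < (hnorm \<psi>)\<^sup>2 - A\<^sup>2"
     "32 * (real L)^3 * Hs L \<le> t * (\<kappa>\<^sup>2/4)"
     "32 * real N * (1 + 8 * A\<^sup>2 / ((cmod a)\<^sup>2 * real L)) \<le> real L"
     "t powr (1/3 - 1/(real j + 3)) \<le> real N" "t powr (- (1/(real j + 3))) \<le> (cmod a)\<^sup>2 * real L / 8"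
    unfolding Fset_def by blast
  define c where "c = (cmod a)\<^sup>2 * real L"
  define r where "r = sqrt (A\<^sup>2 + c / 2)"
  have c0: "c \<ge> 0" unfolding c_def by simp
  have A0: "A > 0" using w(4) hnorm_nonneg order_le_less_trans by blast
  have Ac: "0 \<le> A\<^sup>2 + c / 2" by (intro add_nonneg_nonneg) (use c0 in auto)
  have r0: "r \<ge> 0" unfolding r_def using Ac by simp
  have rpsi: "r < hnorm \<psi>"
  proof -
    have "A\<^sup>2 + c / 2 < (hnorm \<psi>)\<^sup>2" using w(5) unfolding c_def by simp
    hence "sqrt (A\<^sup>2 + c / 2) < sqrt ((hnorm \<psi>)\<^sup>2)" by (rule real_sqrt_less_mono)
    thus ?thesis unfolding r_def using hnorm_nonneg[of \<psi>] by simp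
  qed
  define e where "e = min (A - hnorm (\<lambda>i. \<psi> i - eta a L i)) (hnorm \<psi> - r)"
  have e: "e > 0" unfolding e_def using w(4) rpsi by simp
  show "\<exists>e>0. \<forall>y\<in>hyd_space. hdist y \<psi> < e \<longrightarrow> y \<in> Fset \<kappa> j"
  proof (intro exI[of _ e] conjI ballI impI e)
    fix y assume y: "y \<in> hyd_space" and d: "hdist y \<psi> < e"
    have ym: "(\<lambda>i. y i - eta a L i) \<in> hyd_space" by (rule hs_diff[OF y eta_in])
    have pm: "(\<lambda>i. \<psi> i - eta a L i) \<in> hyd_space" by (rule hs_diff[OF psi eta_in])
    have "hnorm (\<lambda>i. y i - eta a L i) \<le> hnorm (\<lambda>i. \<psi> i - eta a L i) + hdist y \<psi>"
    proof -
      have "hnorm (\<lambda>i. y i - eta a L i) \<le> hdist (\<lambda>i. y i - eta a L i) (\<lambda>i. \<psi> i - eta a L i) + hnorm (\<lambda>i. \<psi> i - eta a L i)"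
        using hnorm_rev_triangle[OF ym pm] by simp
      also have "hdist (\<lambda>i. y i - eta a L i) (\<lambda>i. \<psi> i - eta a L i) = hdist y \<psi>"
        unfolding hdist_def by simp
      finally show ?thesis by simp
    qed
    hence h4: "hnorm (\<lambda>i. y i - eta a L i) < A" using d unfolding e_def by simp
    have "hnorm y \<ge> hnorm \<psi> - hdist y \<psi>" using hnorm_rev_triangle[OF y psi] by simp
    hence yr: "hnorm y > r" using d unfolding e_def by simp
    have "A\<^sup>2 + c / 2 = r\<^sup>2" unfolding r_def using Ac by simp
    also have "\<dots> < (hnorm y)\<^sup>2" using yr r0 by (intro power_strict_mono) auto
    finally have h5: "(cmod a)\<^sup>2 * real L / 2 < (hnorm y)\<^sup>2 - A\<^sup>2" unfolding c_def by simp
    show "y \<in> Fset \<kappa> j" unfolding Fset_def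
      using y w(1-3) h4 h5 w(6-9) by blast
  qed
qed

lemma Hs_le_ln: assumes "L \<ge> 1" shows "Hs L \<le> 1 + ln (real L)"
proof -
  have "harm L - ln (real L) \<le> harm 1 - ln (real 1)"
    using euler_mascheroni_sequence_decreasing[of 1 L] assms by simp
  moreover have "Hs L = harm L" unfolding Hs_def harm_def by (simp add: divide_inverse)
  ultimately show ?thesis by (simp add: harm_def)
qed

lemma trunc:
  assumes phi: "\<phi> \<in> hyd_space" and e: "e > 0"
  shows "\<exists>F. finite F \<and> (\<lambda>i. if i \<in> F then 0 else \<phi> i) \<in> hyd_space \<and>
             hnorm (\<lambda>i. if i \<in> F then 0 else \<phi> i) < e"
proof -
  define f where "f i = (cmod (\<phi> i))\<^sup>2" for i
  have fs: "f summable_on UNIV" unfolding f_def by (rule hs_summable[OF phi])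
  obtain F where F: "finite F" "dist (sum f F) (infsum f UNIV) \<le> e\<^sup>2 / 2"
    using has_sum_finite_approximation[OF has_sum_infsum[OF fs], of "e\<^sup>2/2"] e by auto
  define g where "g = (\<lambda>i. if i \<in> F then 0 else \<phi> i)"
  have gsq: "(cmod (g i))\<^sup>2 \<le> f i" for i by (simp add: g_def f_def)
  have gs: "(\<lambda>i. (cmod (g i))\<^sup>2) summable_on UNIV"
    by (rule summable_on_comparison_test[OF fs gsq]) simp
  have g: "g \<in> hyd_space" unfolding hyd_space_def using gs hs_supp[OF phi] by (auto simp: g_def)
  have hF: "((\<lambda>i. if i \<in> F then f i else 0) has_sum (\<Sum>i\<in>F. f i)) UNIV"
  proof -
    have "((\<lambda>i. if i \<in> F then f i else 0) has_sum (\<Sum>i\<in>F. if i \<in> F then f i else 0)) UNIV"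
      by (rule sum_supp_has_sum[OF F(1)]) simp
    thus ?thesis by simp
  qed
  have split: "f = (\<lambda>i. (if i \<in> F then f i else 0) + (cmod (g i))\<^sup>2)"
    by (rule ext) (simp add: g_def f_def)
  have "infsum f UNIV = (\<Sum>i\<in>F. f i) + infsum (\<lambda>i. (cmod (g i))\<^sup>2) UNIV"
    by (subst split, subst infsum_add[OF has_sum_imp_summable[OF hF] gs]) (simp add: infsumI[OF hF])
  hence "(hnorm g)\<^sup>2 = infsum f UNIV - sum f F" using hnorm_sq[OF g] by simp
  also have "\<dots> \<le> e\<^sup>2 / 2" using F(2) unfolding dist_real_def abs_le_iff by linarith
  also have "\<dots> < e\<^sup>2" using e by simp
  finally have "(hnorm g)\<^sup>2 < e\<^sup>2" .
  hence "hnorm g < e" using e hnorm_nonneg[of g] by (simp add: power_less_imp_less_base)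
  thus ?thesis using F(1) g unfolding g_def by blast
qed

lemma params:
  fixes \<kappa> e Kc :: real and j Lb :: nat
  assumes k: "\<kappa> > 0" and e: "e > 0"
  defines "\<delta> \<equiv> 1 / (real j + 3)"
  shows "\<exists>L::nat. L \<ge> 1 \<and> L > Lb \<and>
     32 * (real L)^3 * (1 + ln (real L)) \<le> (real L) powr (3 + 3*\<delta>) * (\<kappa>\<^sup>2/4) \<and>
     32 * Kc * ((real L) powr (1 - 2*\<delta>) + 1) \<le> real L \<and>
     (real L) powr (-((3 + 3*\<delta>) * \<delta>)) \<le> e\<^sup>2/128 \<and>
     (real L) powr (3 + 3*\<delta>) \<ge> real j + 2"
proof -
  have d: "\<delta> > 0" "2 * \<delta> < 1" unfolding \<delta>_def by (auto simp: field_simps)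
  have ev: "eventually (\<lambda>x::real. x \<ge> 1 \<and> x > real Lb \<and>
     32 * x^3 * (1 + ln x) \<le> x powr (3 + 3*\<delta>) * (\<kappa>\<^sup>2/4) \<and>
     32 * Kc * (x powr (1 - 2*\<delta>) + 1) \<le> x \<and>
     x powr (-((3 + 3*\<delta>) * \<delta>)) \<le> e\<^sup>2/128 \<and>
     x powr (3 + 3*\<delta>) \<ge> real j + 2) at_top"
    using d k e by (intro eventually_conj; real_asymp)
  have "eventually (\<lambda>L::nat. real L \<ge> 1 \<and> real L > real Lb \<and>
     32 * (real L)^3 * (1 + ln (real L)) \<le> (real L) powr (3 + 3*\<delta>) * (\<kappa>\<^sup>2/4) \<and>
     32 * Kc * ((real L) powr (1 - 2*\<delta>) + 1) \<le> real L \<and>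
     (real L) powr (-((3 + 3*\<delta>) * \<delta>)) \<le> e\<^sup>2/128 \<and>
     (real L) powr (3 + 3*\<delta>) \<ge> real j + 2) sequentially"
    by (rule eventually_compose_filterlim[OF ev filterlim_real_sequentially])
  then obtain M :: nat where M: "\<And>L. L \<ge> M \<Longrightarrow> real L \<ge> 1 \<and> real L > real Lb \<and>
     32 * (real L)^3 * (1 + ln (real L)) \<le> (real L) powr (3 + 3*\<delta>) * (\<kappa>\<^sup>2/4) \<and>
     32 * Kc * ((real L) powr (1 - 2*\<delta>) + 1) \<le> real L \<and>
     (real L) powr (-((3 + 3*\<delta>) * \<delta>)) \<le> e\<^sup>2/128 \<and>
     (real L) powr (3 + 3*\<delta>) \<ge> real j + 2"
    unfolding eventually_sequentially by blast
  obtain L :: nat where "real L \<ge> 1 \<and> real L > real Lb \<and>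
     32 * (real L)^3 * (1 + ln (real L)) \<le> (real L) powr (3 + 3*\<delta>) * (\<kappa>\<^sup>2/4) \<and>
     32 * Kc * ((real L) powr (1 - 2*\<delta>) + 1) \<le> real L \<and>
     (real L) powr (-((3 + 3*\<delta>) * \<delta>)) \<le> e\<^sup>2/128 \<and>
     (real L) powr (3 + 3*\<delta>) \<ge> real j + 2"
    using M[OF order_refl] by blast
  thus ?thesis by (intro exI[of _ L]) auto
qed

lemma hinner_disjoint: assumes "\<And>i. cnj (x i) * y i = 0" shows "hinner x y = 0"
proof -
  have "(\<lambda>i. cnj (x i) * y i) = (\<lambda>i. 0)" using assms by (intro ext)
  thus ?thesis unfolding hinner_def by simp
qed

lemma Fset_dense: assumes k: "\<kappa> > 0" shows "hyd_dense (Fset \<kappa> j)"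
  unfolding hyd_dense_def
proof (intro ballI allI impI)
  fix \<phi> :: hvec and e :: real assume phi: "\<phi> \<in> hyd_space" and e: "e > 0"
  obtain F where F: "finite F" and tl: "(\<lambda>i. if i \<in> F then 0 else \<phi> i) \<in> hyd_space"
      and tln: "hnorm (\<lambda>i. if i \<in> F then 0 else \<phi> i) < e/2"
    using trunc[OF phi, of "e/2"] e by auto
  define \<phi>0 where "\<phi>0 = (\<lambda>i. if i \<in> F then \<phi> i else 0)"
  have \<phi>0: "\<phi>0 \<in> hyd_space"
  proof -
    have "\<phi>0 = (\<lambda>i. \<phi> i - (if i \<in> F then 0 else \<phi> i))" by (rule ext) (simp add: \<phi>0_def)
    thus ?thesis using hs_diff[OF phi tl] by simp
  qed
  define L0 where "L0 = Max (insert 0 (fst ` F))"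
  have L0: "fst i \<le> L0" if "i \<in> F" for i
    unfolding L0_def using F that by (intro Max_ge) auto
  define c where "c = e\<^sup>2 / 16"
  have c: "c > 0" unfolding c_def using e by simp
  define P where "P = (hnorm \<phi>0)\<^sup>2"
  have P0: "P \<ge> 0" unfolding P_def by simp
  define A where "A = sqrt (P + c / 4)"
  have A2: "A\<^sup>2 = P + c / 4" unfolding A_def using P0 c by simp
  define K0 where "K0 = 1 + 8 * A\<^sup>2 / c"
  define \<delta> where "\<delta> = 1 / (real j + 3)"
  have d: "\<delta> > 0" "\<delta> \<le> 1/3" unfolding \<delta>_def by (auto simp: field_simps)
  obtain L :: nat where L: "L \<ge> 1" "L > L0"
     "32 * (real L)^3 * (1 + ln (real L)) \<le> (real L) powr (3 + 3*\<delta>) * (\<kappa>\<^sup>2/4)"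
     "32 * K0 * ((real L) powr (1 - 2*\<delta>) + 1) \<le> real L"
     "(real L) powr (-((3 + 3*\<delta>) * \<delta>)) \<le> e\<^sup>2/128"
     "(real L) powr (3 + 3*\<delta>) \<ge> real j + 2"
    using params[OF k e, where Kc=K0 and Lb=L0 and j=j] unfolding \<delta>_def by blast
  define x where "x = real L"
  have x1: "x \<ge> 1" using L(1) by (simp add: x_def)
  define t where "t = x powr (3 + 3*\<delta>)"
  have t0: "t > 0" unfolding t_def using x1 by simp
  define y where "y = t powr (1/3 - \<delta>)"
  have y0: "y > 0" unfolding y_def using t0 by simp
  define N where "N = nat \<lceil>y\<rceil>"
  have Ny: "y \<le> real N" "real N \<le> y + 1"
    unfolding N_def using y0 by (auto intro: of_int_ceiling_le_add_one le_of_int_ceiling)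
  have N1: "N \<ge> 1" using Ny(1) y0 by simp
  define a where "a = complex_of_real (e / (4 * sqrt x))"
  have a0: "a \<noteq> 0" unfolding a_def using e x1 by simp
  have ca: "(cmod a)\<^sup>2 * real L = c"
  proof -
    have "cmod a = e / (4 * sqrt x)" unfolding a_def norm_of_real using e x1 by simp
    hence "(cmod a)\<^sup>2 = e\<^sup>2 / (16 * x)" using x1
      by (simp add: power_divide power_mult_distrib)
    thus ?thesis unfolding c_def x_def[symmetric] using x1 by simp
  qed
  define \<psi> where "\<psi> = (\<lambda>i. \<phi>0 i + eta a L i)"
  have psi: "\<psi> \<in> hyd_space" unfolding \<psi>_def by (rule hs_add[OF \<phi>0 eta_in])
  have diffeq: "(\<lambda>i. \<psi> i - eta a L i) = \<phi>0" by (simp add: \<psi>_def)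
  have disj: "hinner \<phi>0 (eta a L) = 0"
  proof (rule hinner_disjoint)
    fix i show "cnj (\<phi>0 i) * eta a L i = 0"
    proof (cases "i \<in> F")
      case True
      hence "fst i \<le> L0" by (rule L0)
      hence "eta a L i = 0" using L(2) by (simp add: eta_def)
      thus ?thesis by simp
    qed (simp add: \<phi>0_def)
  qed
  have npsi: "(hnorm \<psi>)\<^sup>2 = P + c"
    unfolding \<psi>_def P_def using hnorm_add_sq[OF \<phi>0 eta_in, of a L] disj eta_norm[of a L] ca by simp
  have hA: "hnorm (\<lambda>i. \<psi> i - eta a L i) < A"
  proof -
    have "(hnorm \<phi>0)\<^sup>2 < A\<^sup>2" using A2 c unfolding P_def by simp
    moreover have "A \<ge> 0" unfolding A_def using P0 c by simp
    ultimately have "hnorm \<phi>0 < A" by (rule power2_less_imp_less)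
    thus ?thesis using diffeq by simp
  qed
  have h1: "(cmod a)\<^sup>2 * real L / 2 < (hnorm \<psi>)\<^sup>2 - A\<^sup>2" using ca npsi A2 c by simp
  have h2: "32 * (real L)^3 * Hs L \<le> t * (\<kappa>\<^sup>2/4)"
  proof -
    have "32 * (real L)^3 * Hs L \<le> 32 * (real L)^3 * (1 + ln (real L))"
      using Hs_le_ln[OF L(1)] by (intro mult_left_mono) auto
    thus ?thesis using L(3) unfolding t_def x_def by simp
  qed
  have h3: "32 * real N * (1 + 8 * A\<^sup>2 / ((cmod a)\<^sup>2 * real L)) \<le> real L"
  proof -
    have K0: "K0 \<ge> 1" unfolding K0_def using c by simp
    have "y = x powr ((3 + 3*\<delta>) * (1/3 - \<delta>))" unfolding y_def t_def by (simp add: powr_powr)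
    also have "\<dots> \<le> x powr (1 - 2*\<delta>)"
    proof (rule powr_mono[OF _ x1])
      show "(3 + 3*\<delta>) * (1/3 - \<delta>) \<le> 1 - 2*\<delta>" using d by (simp add: algebra_simps)
    qed
    finally have "real N \<le> x powr (1 - 2*\<delta>) + 1" using Ny(2) by simp
    hence "32 * real N * K0 \<le> 32 * K0 * (x powr (1 - 2*\<delta>) + 1)" using K0 by (simp add: mult_ac)
    also have "\<dots> \<le> real L" using L(4) unfolding x_def .
    finally show ?thesis unfolding K0_def using ca by simp
  qed
  have h4: "t powr (1/3 - 1/(real j + 3)) \<le> real N" using Ny(1) unfolding y_def \<delta>_def .
  have h5: "t powr (- (1/(real j + 3))) \<le> (cmod a)\<^sup>2 * real L / 8"
  proof -
    have "t powr (- (1/(real j + 3))) = x powr (-((3 + 3*\<delta>) * \<delta>))"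
      unfolding t_def \<delta>_def by (simp add: powr_powr)
    also have "\<dots> \<le> e\<^sup>2/128" using L(5) unfolding x_def .
    also have "\<dots> = (cmod a)\<^sup>2 * real L / 8" using ca unfolding c_def by simp
    finally show ?thesis .
  qed
  have h0: "t \<ge> real j + 2" using L(6) unfolding t_def x_def .
  have ex: "\<exists>t a L A N. t \<ge> real j + 2 \<and> a \<noteq> 0 \<and> N \<ge> 1 \<and>
     hnorm (\<lambda>i. \<psi> i - eta a L i) < A \<and> (cmod a)\<^sup>2 * real L / 2 < (hnorm \<psi>)\<^sup>2 - A\<^sup>2 \<and>
     32 * (real L)^3 * Hs L \<le> t * (\<kappa>\<^sup>2/4) \<and>
     32 * real N * (1 + 8 * A\<^sup>2 / ((cmod a)\<^sup>2 * real L)) \<le> real L \<and>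
     t powr (1/3 - 1/(real j + 3)) \<le> real N \<and> t powr (- (1/(real j + 3))) \<le> (cmod a)\<^sup>2 * real L / 8"
    by (rule exI[of _ t], rule exI[of _ a], rule exI[of _ L], rule exI[of _ A], rule exI[of _ N])
       (intro conjI h0 a0 N1 hA h1 h2 h3 h4 h5)
  have inF: "\<psi> \<in> Fset \<kappa> j" unfolding Fset_def mem_Collect_eq using psi ex by (rule conjI)
  have "hdist \<psi> \<phi> < e"
  proof -
    have eq: "(\<lambda>i. \<psi> i - \<phi> i) = (\<lambda>i. eta a L i + - (if i \<in> F then 0 else \<phi> i))"
      by (rule ext) (simp add: \<psi>_def \<phi>0_def)
    have "hdist \<psi> \<phi> \<le> hnorm (eta a L) + hnorm (\<lambda>i. - (if i \<in> F then 0 else \<phi> i))"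
      unfolding hdist_def eq by (rule hnorm_triangle[OF eta_in hs_uminus[OF tl]])
    also have "hnorm (\<lambda>i. - (if i \<in> F then 0 else \<phi> i)) = hnorm (\<lambda>i. if i \<in> F then 0 else \<phi> i)"
      by (rule hnorm_uminus[OF tl])
    also have "hnorm (eta a L) = e / 4"
    proof -
      have "(hnorm (eta a L))\<^sup>2 = (e / 4)\<^sup>2" using eta_norm[of a L] ca unfolding c_def by (simp add: power_divide)
      thus ?thesis using e hnorm_nonneg by (simp add: power2_eq_iff_nonneg)
    qed
    finally show ?thesis using tln e by linarith
  qed
  thus "\<exists>y\<in>Fset \<kappa> j. hdist y \<phi> < e" using inF by blast
qed

definition bfun :: "real \<Rightarrow> hvec \<Rightarrow> real \<Rightarrow> (nat \<Rightarrow> hvec) \<Rightarrow> real \<Rightarrow> ereal" where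
  "bfun \<kappa> \<psi> p B t = (let r = hyd_moment \<kappa> p B \<psi> t in
        if r = \<infinity> then \<infinity> else ereal (ln (real_of_ereal r) / ln t))"

lemma beta_eq: "hyd_beta_plus \<kappa> \<psi> p B = Limsup at_top (bfun \<kappa> \<psi> p B)"
  unfolding hyd_beta_plus_def bfun_def by simp

lemma bfun_lower:
  assumes t: "t > 1" and p: "p > 0" and M: "M > 0"
    and S: "ereal M \<le> hyd_moment_sum \<kappa> p B \<psi> t"
  shows "bfun \<kappa> \<psi> p B t \<ge> ereal (ln M / (p * ln t))"
proof (cases "hyd_moment_sum \<kappa> p B \<psi> t = \<infinity>")
  case True
  thus ?thesis unfolding bfun_def hyd_moment_def by simp
next
  case False
  define s where "s = real_of_ereal (hyd_moment_sum \<kappa> p B \<psi> t)"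
  have Ss: "hyd_moment_sum \<kappa> p B \<psi> t = ereal s"
    using False S unfolding s_def by (cases "hyd_moment_sum \<kappa> p B \<psi> t") auto
  have sM: "s \<ge> M" using S Ss by simp
  have s0: "s > 0" using sM M by simp
  have lt: "ln t > 0" using t by simp
  have "bfun \<kappa> \<psi> p B t = ereal (ln (s powr (1/p)) / ln t)"
    unfolding bfun_def hyd_moment_def Let_def using Ss by simp
  also have "ln (s powr (1/p)) / ln t = ln s / (p * ln t)"
    using s0 by (simp add: ln_powr)
  finally have eq: "bfun \<kappa> \<psi> p B t = ereal (ln s / (p * ln t))" .
  have "ln M \<le> ln s" using sM M by simp
  hence "ln M / (p * ln t) \<le> ln s / (p * ln t)" using p lt by (intro divide_right_mono) auto
  thus ?thesis unfolding eq by simp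
qed

lemma Fset_bound:
  assumes k: "\<kappa> > 0" and psiF: "\<psi> \<in> Fset \<kappa> j" and onb: "hyd_onb B" and p: "p > 0"
  shows "\<exists>t \<ge> real j + 2. bfun \<kappa> \<psi> p B t \<ge> ereal (1/3 - 1/(real j + 3) - 1/(real j + 3) / p)"
proof -
  define \<delta> where "\<delta> = 1/(real j + 3)"
  obtain t a L A N where psi: "\<psi> \<in> hyd_space" and w: "t \<ge> real j + 2" "a \<noteq> 0" "N \<ge> 1"
     "hnorm (\<lambda>i. \<psi> i - eta a L i) < A" "(cmod a)\<^sup>2 * real L / 2 < (hnorm \<psi>)\<^sup>2 - A\<^sup>2"
     "32 * (real L)^3 * Hs L \<le> t * (\<kappa>\<^sup>2/4)"
     "32 * real N * (1 + 8 * A\<^sup>2 / ((cmod a)\<^sup>2 * real L)) \<le> real L"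
     "t powr (1/3 - \<delta>) \<le> real N" "t powr (- \<delta>) \<le> (cmod a)\<^sup>2 * real L / 8"
    using psiF unfolding Fset_def \<delta>_def by blast
  have t: "t > 1" using w(1) by simp
  have core': "ereal (real N powr p * ((cmod a)\<^sup>2 * real L / 8)) \<le> hyd_moment_sum \<kappa> p B \<psi> t"
    by (rule core[OF k onb psi _ w(3) w(2) p less_imp_le[OF w(4)] less_imp_le[OF w(5)] w(6) w(7)]) (use t in simp)
  define M where "M = t powr (p * (1/3 - \<delta>) - \<delta>)"
  have M0: "M > 0" unfolding M_def using t by simp
  have "M = (t powr (1/3 - \<delta>)) powr p * t powr (- \<delta>)"
    unfolding M_def by (simp add: powr_powr powr_add[symmetric] mult_ac)
  also have "\<dots> \<le> real N powr p * ((cmod a)\<^sup>2 * real L / 8)"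
    by (intro mult_mono powr_mono2 w(8) w(9)) (use p in auto)
  finally have "ereal M \<le> ereal (real N powr p * ((cmod a)\<^sup>2 * real L / 8))" by simp
  hence "ereal M \<le> hyd_moment_sum \<kappa> p B \<psi> t" using core' by (rule order_trans)
  hence "bfun \<kappa> \<psi> p B t \<ge> ereal (ln M / (p * ln t))" by (rule bfun_lower[OF t p M0])
  moreover have "ln M / (p * ln t) = 1/3 - \<delta> - \<delta> / p"
  proof -
    have lt: "ln t > 0" using t by simp
    have "ln M = (p * (1/3 - \<delta>) - \<delta>) * ln t" unfolding M_def using t by (simp add: ln_powr)
    thus ?thesis using lt p by (simp add: field_simps)
  qed
  ultimately have "bfun \<kappa> \<psi> p B t \<ge> ereal (1/3 - \<delta> - \<delta> / p)" by simp
  thus ?thesis using w(1) unfolding \<delta>_def by blast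
qed

lemma beta_ge:
  assumes k: "\<kappa> > 0" and psiR: "\<And>j. \<psi> \<in> Fset \<kappa> j" and onb: "hyd_onb B" and p: "p > 0"
  shows "hyd_beta_plus \<kappa> \<psi> p B \<ge> ereal (1/3)"
proof (rule ccontr)
  assume "\<not> ?thesis"
  hence "Limsup at_top (bfun \<kappa> \<psi> p B) < ereal (1/3)" unfolding beta_eq by simp
  then obtain y where y1: "Limsup at_top (bfun \<kappa> \<psi> p B) < ereal y" and y2: "ereal y < ereal (1/3)"
    using ereal_dense2[of "Limsup at_top (bfun \<kappa> \<psi> p B)" "ereal (1/3)"] by blast
  have "eventually (\<lambda>t. bfun \<kappa> \<psi> p B t < ereal y) at_top" by (rule Limsup_lessD[OF y1])
  then obtain T where T: "\<And>t. t \<ge> T \<Longrightarrow> bfun \<kappa> \<psi> p B t < ereal y"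
    unfolding eventually_at_top_linorder by blast
  have y3: "1/3 - y > 0" using y2 by simp
  define j where "j = nat \<lceil>max T ((1 + 1/p) / (1/3 - y))\<rceil>"
  have jm: "max T ((1 + 1/p) / (1/3 - y)) \<le> real j" unfolding j_def by (rule real_nat_ceiling_ge)
  have jT: "real j \<ge> T" using jm by linarith
  have jy: "real j \<ge> (1 + 1/p) / (1/3 - y)" using jm by linarith
  have "(1 + 1/p) / (real j + 3) \<le> 1/3 - y"
  proof -
    have "(1 + 1/p) \<le> (1/3 - y) * real j" using jy y3 by (simp add: divide_le_eq mult.commute)
    also have "\<dots> \<le> (1/3 - y) * (real j + 3)" using y3 by simp
    finally show ?thesis by (simp add: divide_le_eq)
  qed
  moreover have "1/(real j + 3) + 1/(real j + 3) / p = (1 + 1/p) / (real j + 3)"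
    by (simp add: add_divide_distrib divide_divide_eq_left mult.commute)
  ultimately have bnd: "y \<le> 1/3 - 1/(real j + 3) - 1/(real j + 3) / p" by linarith
  obtain t where t: "t \<ge> real j + 2" and bt: "bfun \<kappa> \<psi> p B t \<ge> ereal (1/3 - 1/(real j + 3) - 1/(real j + 3) / p)"
    using Fset_bound[OF k psiR onb p] by blast
  have "t \<ge> T" using t jT by linarith
  hence "bfun \<kappa> \<psi> p B t < ereal y" by (rule T)
  moreover have "ereal y \<le> bfun \<kappa> \<psi> p B t" using bnd bt by (intro order_trans[OF _ bt]) simp
  ultimately show False by simp
qed

theorem theorem2:
  fixes \<kappa> :: real
  assumes "\<kappa> > 0"
  shows "\<exists>R. hyd_generic R \<and>
           (\<forall>\<psi>\<in>R. \<forall>B. hyd_onb B \<longrightarrow>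
              (\<forall>p>0. hyd_beta_plus \<kappa> \<psi> p B \<ge> ereal (1/3)) \<and>
              (\<exists>p>0. hyd_beta_plus \<kappa> \<psi> p B > 0))"
proof -
  have gen: "hyd_generic (\<Inter>j. Fset \<kappa> j)" unfolding hyd_generic_def
    by (rule exI[of _ "Fset \<kappa>"]) (simp add: Fset_open Fset_dense[OF assms])
  have main: "\<forall>\<psi>\<in>(\<Inter>j. Fset \<kappa> j). \<forall>B. hyd_onb B \<longrightarrow>
              (\<forall>p>0. hyd_beta_plus \<kappa> \<psi> p B \<ge> ereal (1/3)) \<and>
              (\<exists>p>0. hyd_beta_plus \<kappa> \<psi> p B > 0)"
  proof (intro ballI allI impI)
    fix \<psi> B assume psi: "\<psi> \<in> (\<Inter>j. Fset \<kappa> j)" and onb: "hyd_onb B"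
    have psiR: "\<And>j. \<psi> \<in> Fset \<kappa> j" using psi by blast
    have P1: "\<forall>p>0. hyd_beta_plus \<kappa> \<psi> p B \<ge> ereal (1/3)"
    proof (intro allI impI)
      fix p :: real assume "p > 0"
      thus "hyd_beta_plus \<kappa> \<psi> p B \<ge> ereal (1/3)" by (rule beta_ge[OF assms psiR onb])
    qed
    have "hyd_beta_plus \<kappa> \<psi> 1 B \<ge> ereal (1/3)" using P1 by simp
    hence "hyd_beta_plus \<kappa> \<psi> 1 B > 0" by (rule less_le_trans[rotated]) simp
    hence P2: "\<exists>p>0. hyd_beta_plus \<kappa> \<psi> p B > 0" by (intro exI[of _ 1]) simp
    show "(\<forall>p>0. hyd_beta_plus \<kappa> \<psi> p B \<ge> ereal (1/3)) \<and> (\<exists>p>0. hyd_beta_plus \<kappa> \<psi> p B > 0)"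
      using P1 P2 by (rule conjI)
  qed
  show ?thesis by (rule exI[of _ "\<Inter>j. Fset \<kappa> j"], rule conjI[OF gen main])
qed

end
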